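(* Under the model assumptions in the context, suppose the distribution of $\mathbf W$ is $p_{\mathbf W}(\cdot;\boldsymbol\psi^* )$ where $\boldsymbol\psi^*\in\Theta_{\boldsymbol\psi}$ satisfies $\pi^1<\dots<\pi^J$ and conditions ID$(k)$ for some integer $k\ge1$ with $T_0\ge k+1$, $T\ge 2(k+1)$. Then for each $t\ge T_0+1$ the ATT $\boldsymbol\mu^{\mathrm{ATT}}_t=\mathbb{E}[\mathbf X_t(1)-\mathbf X_t(0)\mid D=1]=\sum_{j=1}^J\Pr(Z=j\mid D=1)\boldsymbol\mu^{\mathrm{ATT},j}_t$ is uniquely determined by the pmf $\{p_{\mathbf W}(\mathbf w;\boldsymbol\psi^* ):\mathbf w\in\mathcal X^T\times\{0,1\}\}$.
   Context: Fix integers $K\ge2$, $J\ge1$, $T_0\ge1$, $T>T_0$, $\mathcal X=\{x\in\{0,1\}^K:\sum_k x^{(k)}=1\}$. A unit has latent type $Z\in\{1,\dots,J\}$, treatment indicator $D\in\{0,1\}$ (treated units untreated in periods $\le T_0$, treated afterwards), potential outcomes $\mathbf X_t(0),\mathbf X_t(1)\in\mathcal X$; observed $\mathbf X_t=\mathbf X_t(0)$ for $t\le T_0$, $\mathbf X_t=D\mathbf X_t(1)+(1-D)\mathbf X_t(0)$ for $t>T_0$, $\mathbf W=(\mathbf X_1,\dots,\mathbf X_T,D)$, $\mathbf X_1^{T_0}=(\mathbf X_1,\dots,\mathbf X_{T_0})$. LTATT: $\boldsymbol\mu^{\mathrm{ATT},j}_t=\mathbb{E}[\mathbf X_t(1)-\mathbf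 X_t(0)\mid D=1,Z=j]$. Model assumptions: no anticipation ($\mathbf X_t(1)=\mathbf X_t(0)$, $t\le T_0$); for $t\ge T_0+1$ and all $\mathbf x_t,\mathbf x_1^{T_0},j$: $\Pr(\mathbf X_t(0)=\mathbf x_t\mid\mathbf X_1^{T_0}=\mathbf x_1^{T_0},D=0,Z=j)=\Pr(\mathbf X_t(0)=\mathbf x_t\mid\mathbf X_1^{T_0}=\mathbf x_1^{T_0},D=1,Z=j)$; there is $\epsilon>0$ with $\epsilon\le\Pr(D=1\mid\mathbf X_1^{T_0}=\mathbf x_1^{T_0},Z=j)\le1-\epsilon$; for each $j,d$, conditional on $Z=j,D=d$, $\{\mathbf X_t(d)\}_{t=1}^T$ is a first-order (possibly non-stationary) Markov chain. $J$ is known. Parametrization: $\boldsymbol\psi=(\boldsymbol\pi,\boldsymbol\varphi^1,\dots,\boldsymbol\varphi^J)$, $\pi^j=\Pr(Z=j)$, $\boldsymbol\varphi^j$ consisting of $p^j_{\mathbf X_1(0),D}(x,d)=\Pr(\mathbf X_1(0)=x,D=d\mid Z=j)$, $p^j_{\mathbf X_t(0)|\mathbf X_{t-1}(0)}(x|x')=\Pr(\mathbf X_t(0)=x\mid\mathbf X_{t-1}(0)=x',Z=j)$ ($t=2,\dots,T$), $p^j_{\mathbf X_t(1)|\mathbf X_{t-1}(1)}(x|x')$ ($t=T_0+1,\dots,T$). $\Theta_{\boldsymbol\psi}$: $\sum_j\pi^j=1$, $\epsilon\le\pi^j\le1-\epsilon$. $p_{\mathbf W}(\mathbf w;\boldsymbol\psi)=\sum_j\pi^jp^j_{\mathbf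 W}(\mathbf w;\boldsymbol\varphi^j)$, where for $\mathbf w=(x_1,\dots,x_T,d)$: $p^j_{\mathbf W}=p^j_{\mathbf X_1(0),D}(x_1,0)\prod_{t=2}^Tp^j_{\mathbf X_t(0)|\mathbf X_{t-1}(0)}(x_t|x_{t-1})$ if $d=0$, and $p^j_{\mathbf X_1(0),D}(x_1,1)\prod_{t=2}^{T_0}p^j_{\mathbf X_t(0)|\mathbf X_{t-1}(0)}(x_t|x_{t-1})\prod_{t=T_0+1}^Tp^j_{\mathbf X_t(1)|\mathbf X_{t-1}(1)}(x_t|x_{t-1})$ if $d=1$. Conditions ID$(k)$: for $\xi_1=(x_1,\dots,x_k)\in\mathcal X^k$, $P^j_1(\xi_1,d)=p^j_{\mathbf X_1(0),D}(x_1,d)\prod_{t=2}^kp^j_{\mathbf X_t(0)|\mathbf X_{t-1}(0)}(x_t|x_{t-1})$, $\tau^j(\xi_1,d)=\pi^jP^j_1(\xi_1,d)/\sum_m\pi^mP^m_1(\xi_1,d)$; $q^j_{21}(\xi_2|\xi_1)=p^j_{\mathbf X_{k+1}(0)|\mathbf X_k(0)}(\xi_2|x_k)$; $q^j_{32}(\xi_3|\xi_2)=p^j_{\mathbf X_{k+2}(0)|\mathbf X_{k+1}(0)}(\xi_3|\xi_2)$; $q^j_{43}(\xi_4|\xi_3)=\prod_{t=k+3}^Tp^j_{\mathbf X_t(0)|\mathbf X_{t-1}(0)}(x_t|x_{t-1})$ for $\xi_4=(x_{k+3},\dots,x_T)$, $x_{k+2}=\xi_3$; $\lambda^j_1(\xi_2|\xi_1)=\tau^j(\xi_1,0)q^j_{21}(\xi_2|\xi_1)$.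 Given $a_1,\dots,a_J\in\mathcal X^k$, $b_1,\dots,b_{J-1}\in\mathcal X^{T-k-2}$: $\bar L_{\xi_2}=[\lambda^j_1(\xi_2|a_i)]_{i,j}$; $L_{\xi_3}$ has first row all ones and $(i+1,j)$ entry $q^j_{43}(b_i|\xi_3)$; $D_{\xi_3|\xi_2}=\mathrm{diag}_j(q^j_{32}(\xi_3|\xi_2))$. (a) There is $\xi_3^*\in\mathcal X$ such that for every $\xi_3\in\mathcal X$ there exist $\check\xi_2,\bar\xi_2,\bar\xi_3\in\mathcal X$, $a_i$, $b_i$ with (i) $\bar L_{\check\xi_2},\bar L_{\bar\xi_2},L_{\xi_3},L_{\xi_3^*},L_{\bar\xi_3}$ nonsingular, (ii) the diagonal entries of $D_{\xi_3|\check\xi_2}D_{\bar\xi_3|\check\xi_2}^{-1}D_{\bar\xi_3|\bar\xi_2}D_{\xi_3|\bar\xi_2}^{-1}$ pairwise distinct; (b) all $q^j_{32},q^j_{43}$ values positive; (c) for every $\xi_1$ there are $c_1,\dots,c_J\in\mathcal X$ with $[q^j_{21}(c_i|\xi_1)]_{i,j}$ nonsingular; (d) for every $\xi_2$ there are $e_1,\dots,e_J\in\mathcal X^k$ with $[\tau^j(e_i,1)q^j_{21}(\xi_2|e_i)]_{i,j}$ nonsingular. *)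

theory Defs
  imports Complex_Main "Jordan_Normal_Form.Determinant"
begin

(* Encoding conventions:
   - an element of the outcome space X (one-hot vectors in {0,1}^K) is encoded by
     the index of its unique 1, i.e. a natural number < K;
   - latent types are indexed 0..J-1 (paper: 1..J); treatment d is 0 or 1;
   - a sequence (x_1,...,x_n) in X^n is a list xs of length n, with x_t = xs ! (t-1). *)

definition paths :: "nat \<Rightarrow> nat \<Rightarrow> nat list set" where
  "paths K n = {xs. length xs = n \<and> set xs \<subseteq> {..<K}}"

record param =
  mixw   :: "nat \<Rightarrow> real"                         (* pi^j = Pr(Z=j) *)
  init   :: "nat \<Rightarrow> nat \<Rightarrow> nat \<Rightarrow> real"           (* init j x d = p^j_{X_1(0),D}(x,d) *)
  trans0 :: "nat \<Rightarrow> nat \<Rightarrow> nat \<Rightarrow> nat \<Rightarrow> real"   (* trans0 j t x x' = p^j_{X_t(0)|X_{t-1}(0)}(x|x'), t=2..T *)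
  trans1 :: "nat \<Rightarrow> nat \<Rightarrow> nat \<Rightarrow> nat \<Rightarrow> real"   (* trans1 j t x x' = p^j_{X_t(1)|X_{t-1}(1)}(x|x'), t=T0+1..T *)

definition in_Theta :: "nat \<Rightarrow> real \<Rightarrow> param \<Rightarrow> bool" where
  "in_Theta J \<epsilon> \<psi> \<longleftrightarrow> (\<Sum>j<J. mixw \<psi> j) = 1 \<and>
     (\<forall>j<J. \<epsilon> \<le> mixw \<psi> j \<and> mixw \<psi> j \<le> 1 - \<epsilon>)"

definition valid_pmfs :: "nat \<Rightarrow> nat \<Rightarrow> nat \<Rightarrow> nat \<Rightarrow> param \<Rightarrow> bool" where
  "valid_pmfs K J T0 T \<psi> \<longleftrightarrow>
     (\<forall>j<J.
        (\<forall>x<K. \<forall>d\<in>{0,1}. init \<psi> j x d \<ge> 0) \<and>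
        (\<Sum>x<K. init \<psi> j x 0 + init \<psi> j x 1) = 1 \<and>
        (\<forall>t\<in>{2..T}. \<forall>x'<K. (\<forall>x<K. trans0 \<psi> j t x x' \<ge> 0) \<and> (\<Sum>x<K. trans0 \<psi> j t x x') = 1) \<and>
        (\<forall>t\<in>{T0+1..T}. \<forall>x'<K. (\<forall>x<K. trans1 \<psi> j t x x' \<ge> 0) \<and> (\<Sum>x<K. trans1 \<psi> j t x x') = 1))"

(* Pr(X_1^n(0) = xs, D = d | Z = j), using the untreated transitions for t = 2..n *)
definition Ppre :: "param \<Rightarrow> nat \<Rightarrow> nat \<Rightarrow> nat list \<Rightarrow> nat \<Rightarrow> real" where
  "Ppre \<psi> j n xs d = init \<psi> j (xs ! 0) d * (\<Prod>t\<in>{2..n}. trans0 \<psi> j t (xs ! (t - 1)) (xs ! (t - 2)))"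

(* overlap: eps <= Pr(D=1 | X_1^{T0} = x, Z = j) <= 1 - eps *)
definition overlap :: "nat \<Rightarrow> nat \<Rightarrow> nat \<Rightarrow> real \<Rightarrow> param \<Rightarrow> bool" where
  "overlap K J T0 \<epsilon> \<psi> \<longleftrightarrow>
     (\<forall>j<J. \<forall>xs\<in>paths K T0.
        \<epsilon> * (Ppre \<psi> j T0 xs 0 + Ppre \<psi> j T0 xs 1) \<le> Ppre \<psi> j T0 xs 1 \<and>
        Ppre \<psi> j T0 xs 1 \<le> (1 - \<epsilon>) * (Ppre \<psi> j T0 xs 0 + Ppre \<psi> j T0 xs 1))"

definition model :: "nat \<Rightarrow> nat \<Rightarrow> nat \<Rightarrow> nat \<Rightarrow> real \<Rightarrow> param \<Rightarrow> bool" where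
  "model K J T0 T \<epsilon> \<psi> \<longleftrightarrow> in_Theta J \<epsilon> \<psi> \<and> valid_pmfs K J T0 T \<psi> \<and> overlap K J T0 \<epsilon> \<psi>"

definition pWj :: "nat \<Rightarrow> nat \<Rightarrow> param \<Rightarrow> nat \<Rightarrow> nat list \<Rightarrow> nat \<Rightarrow> real" where
  "pWj T0 T \<psi> j xs d =
     (if d = 0 then Ppre \<psi> j T xs 0
      else Ppre \<psi> j T0 xs 1 * (\<Prod>t\<in>{T0+1..T}. trans1 \<psi> j t (xs ! (t - 1)) (xs ! (t - 2))))"

definition pW :: "nat \<Rightarrow> nat \<Rightarrow> nat \<Rightarrow> param \<Rightarrow> nat list \<Rightarrow> nat \<Rightarrow> real" where
  "pW J T0 T \<psi> xs d = (\<Sum>j<J. mixw \<psi> j * pWj T0 T \<psi> j xs d)"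

(* model-implied law of the untreated potential path of a treated unit of type j:
   Pr(X_1^T(0) = xs, D = 1 | Z = j)  (no anticipation, conditional parallel evolution, Markov) *)
definition pW0cf :: "nat \<Rightarrow> nat \<Rightarrow> param \<Rightarrow> nat \<Rightarrow> nat list \<Rightarrow> real" where
  "pW0cf T0 T \<psi> j xs =
     Ppre \<psi> j T0 xs 1 * (\<Prod>t\<in>{T0+1..T}. trans0 \<psi> j t (xs ! (t - 1)) (xs ! (t - 2)))"

definition prD1 :: "nat \<Rightarrow> nat \<Rightarrow> param \<Rightarrow> nat \<Rightarrow> real" where
  "prD1 K T0 \<psi> j = (\<Sum>x<K. init \<psi> j x 1)"

definition postZ :: "nat \<Rightarrow> nat \<Rightarrow> nat \<Rightarrow> param \<Rightarrow> nat \<Rightarrow> real" where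
  "postZ K J T0 \<psi> j = mixw \<psi> j * prD1 K T0 \<psi> j / (\<Sum>m<J. mixw \<psi> m * prD1 K T0 \<psi> m)"

(* c-th coordinate of the LTATT mu^{ATT,j}_t = E[X_t(1) - X_t(0) | D=1, Z=j] *)
definition ltatt :: "nat \<Rightarrow> nat \<Rightarrow> nat \<Rightarrow> param \<Rightarrow> nat \<Rightarrow> nat \<Rightarrow> nat \<Rightarrow> real" where
  "ltatt K T0 T \<psi> j t c =
     ((\<Sum>xs\<in>paths K T. if xs ! (t - 1) = c then pWj T0 T \<psi> j xs 1 else 0)
      - (\<Sum>xs\<in>paths K T. if xs ! (t - 1) = c then pW0cf T0 T \<psi> j xs else 0))
     / prD1 K T0 \<psi> j"

definition att :: "nat \<Rightarrow> nat \<Rightarrow> nat \<Rightarrow> nat \<Rightarrow> param \<Rightarrow> nat \<Rightarrow> nat \<Rightarrow> real" where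
  "att K J T0 T \<psi> t c = (\<Sum>j<J. postZ K J T0 \<psi> j * ltatt K T0 T \<psi> j t c)"

definition tau :: "nat \<Rightarrow> nat \<Rightarrow> param \<Rightarrow> nat \<Rightarrow> nat list \<Rightarrow> nat \<Rightarrow> real" where
  "tau J k \<psi> j \<xi>1 d = mixw \<psi> j * Ppre \<psi> j k \<xi>1 d / (\<Sum>m<J. mixw \<psi> m * Ppre \<psi> m k \<xi>1 d)"

definition q21 :: "nat \<Rightarrow> param \<Rightarrow> nat \<Rightarrow> nat \<Rightarrow> nat list \<Rightarrow> real" where
  "q21 k \<psi> j \<xi>2 \<xi>1 = trans0 \<psi> j (k + 1) \<xi>2 (\<xi>1 ! (k - 1))"

definition q32 :: "nat \<Rightarrow> param \<Rightarrow> nat \<Rightarrow> nat \<Rightarrow> nat \<Rightarrow> real" where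
  "q32 k \<psi> j \<xi>3 \<xi>2 = trans0 \<psi> j (k + 2) \<xi>3 \<xi>2"

(* xi4 = (x_{k+3},...,x_T) = xi4 ! 0, ..., and x_{k+2} = xi3 *)
definition q43 :: "nat \<Rightarrow> nat \<Rightarrow> param \<Rightarrow> nat \<Rightarrow> nat list \<Rightarrow> nat \<Rightarrow> real" where
  "q43 T k \<psi> j \<xi>4 \<xi>3 =
     (\<Prod>t\<in>{k+3..T}. trans0 \<psi> j t (\<xi>4 ! (t - (k + 3)))
                         (if t = k + 3 then \<xi>3 else \<xi>4 ! (t - (k + 4))))"

definition lambda1 :: "nat \<Rightarrow> nat \<Rightarrow> param \<Rightarrow> nat \<Rightarrow> nat \<Rightarrow> nat list \<Rightarrow> real" where
  "lambda1 J k \<psi> j \<xi>2 \<xi>1 = tau J k \<psi> j \<xi>1 0 * q21 k \<psi> j \<xi>2 \<xi>1"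

(* \bar L_{xi2} = [lambda^j_1(xi2 | a_i)]_{i,j}  (0-based indices) *)
definition Lbar :: "nat \<Rightarrow> nat \<Rightarrow> param \<Rightarrow> (nat \<Rightarrow> nat list) \<Rightarrow> nat \<Rightarrow> real mat" where
  "Lbar J k \<psi> a \<xi>2 = mat J J (\<lambda>(i, j). lambda1 J k \<psi> j \<xi>2 (a i))"

definition Lmat :: "nat \<Rightarrow> nat \<Rightarrow> nat \<Rightarrow> param \<Rightarrow> (nat \<Rightarrow> nat list) \<Rightarrow> nat \<Rightarrow> real mat" where
  "Lmat J T k \<psi> b \<xi>3 = mat J J (\<lambda>(i, j). if i = 0 then 1 else q43 T k \<psi> j (b (i - 1)) \<xi>3)"

(* j-th diagonal entry of D_{xi3|chk2} D_{bar3|chk2}^{-1} D_{bar3|bar2} D_{xi3|bar2}^{-1} *)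
definition eigen_entry :: "nat \<Rightarrow> param \<Rightarrow> nat \<Rightarrow> nat \<Rightarrow> nat \<Rightarrow> nat \<Rightarrow> nat \<Rightarrow> real" where
  "eigen_entry k \<psi> \<xi>3 chk2 bar2 bar3 j =
     q32 k \<psi> j \<xi>3 chk2 * inverse (q32 k \<psi> j bar3 chk2) *
     q32 k \<psi> j bar3 bar2 * inverse (q32 k \<psi> j \<xi>3 bar2)"

definition ID_a :: "nat \<Rightarrow> nat \<Rightarrow> nat \<Rightarrow> nat \<Rightarrow> param \<Rightarrow> bool" where
  "ID_a K J T k \<psi> \<longleftrightarrow>
     (\<exists>s3<K. \<forall>\<xi>3<K. \<exists>chk2<K. \<exists>bar2<K. \<exists>bar3<K. \<exists>a b.
        (\<forall>i<J. a i \<in> paths K k) \<and> (\<forall>i<J - 1. b i \<in> paths K (T - k - 2)) \<and>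
        det (Lbar J k \<psi> a chk2) \<noteq> 0 \<and> det (Lbar J k \<psi> a bar2) \<noteq> 0 \<and>
        det (Lmat J T k \<psi> b \<xi>3) \<noteq> 0 \<and> det (Lmat J T k \<psi> b s3) \<noteq> 0 \<and>
        det (Lmat J T k \<psi> b bar3) \<noteq> 0 \<and>
        inj_on (eigen_entry k \<psi> \<xi>3 chk2 bar2 bar3) {..<J})"

definition ID_b :: "nat \<Rightarrow> nat \<Rightarrow> nat \<Rightarrow> nat \<Rightarrow> param \<Rightarrow> bool" where
  "ID_b K J T k \<psi> \<longleftrightarrow>
     (\<forall>j<J. (\<forall>\<xi>3<K. \<forall>\<xi>2<K. q32 k \<psi> j \<xi>3 \<xi>2 > 0) \<and>
            (\<forall>\<xi>4\<in>paths K (T - k - 2). \<forall>\<xi>3<K. q43 T k \<psi> j \<xi>4 \<xi>3 > 0))"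

definition ID_c :: "nat \<Rightarrow> nat \<Rightarrow> nat \<Rightarrow> param \<Rightarrow> bool" where
  "ID_c K J k \<psi> \<longleftrightarrow>
     (\<forall>\<xi>1\<in>paths K k. \<exists>c. (\<forall>i<J. c i < K) \<and>
        det (mat J J (\<lambda>(i, j). q21 k \<psi> j (c i) \<xi>1)) \<noteq> 0)"

definition ID_d :: "nat \<Rightarrow> nat \<Rightarrow> nat \<Rightarrow> param \<Rightarrow> bool" where
  "ID_d K J k \<psi> \<longleftrightarrow>
     (\<forall>\<xi>2<K. \<exists>e. (\<forall>i<J. e i \<in> paths K k) \<and>
        det (mat J J (\<lambda>(i, j). tau J k \<psi> j (e i) 1 * q21 k \<psi> j \<xi>2 (e i))) \<noteq> 0)"

definition ID :: "nat \<Rightarrow> nat \<Rightarrow> nat \<Rightarrow> nat \<Rightarrow> param \<Rightarrow> bool" where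
  "ID K J T k \<psi> \<longleftrightarrow> ID_a K J T k \<psi> \<and> ID_b K J T k \<psi> \<and> ID_c K J k \<psi> \<and> ID_d K J k \<psi>"

end

theory Submission
  imports Defs
begin

lemma det_nz_cols_indep:
  fixes F :: "nat \<Rightarrow> nat \<Rightarrow> real"
  assumes d: "det (mat n n (\<lambda>(i,j). F i j)) \<noteq> 0"
    and h: "\<forall>i<n. (\<Sum>j<n. F i j * v j) = 0" and jn: "j < n"
  shows "v j = 0"
proof -
  let ?A = "mat n n (\<lambda>(i,j). F i j)"
  let ?v = "vec n v"
  have "?A *\<^sub>v ?v = 0\<^sub>v n"
    using h by (auto simp: scalar_prod_def row_def lessThan_atLeast0 intro!: eq_vecI)
  moreover have A: "?A \<in> carrier_mat n n" by simp
  ultimately have "?v = 0\<^sub>v n" using det_0_iff_vec_prod_zero[OF A] d by (meson vec_carrier)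
  then have "?v $ j = 0" using jn by simp
  then show ?thesis using jn by simp
qed

lemma det_nz_rows_indep:
  fixes F :: "nat \<Rightarrow> nat \<Rightarrow> real"
  assumes d: "det (mat n n (\<lambda>(i,j). F i j)) \<noteq> 0"
    and h: "\<forall>j<n. (\<Sum>i<n. v i * F i j) = 0" and jn: "i < n"
  shows "v i = 0"
proof -
  have t: "transpose_mat (mat n n (\<lambda>(i,j). F i j)) = mat n n (\<lambda>(i,j). F j i)"
    by (auto intro!: eq_matI)
  have "det (mat n n (\<lambda>(i,j). F j i)) \<noteq> 0"
    using d det_transpose[of "mat n n (\<lambda>(i,j). F i j)" n] t by simp
  then show ?thesis using det_nz_cols_indep[of n "\<lambda>i j. F j i" v i] h jn by (simp add: mult.commute)
qed

lemma det_nz_inverse: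
  fixes F :: "nat \<Rightarrow> nat \<Rightarrow> real"
  assumes d: "det (mat n n (\<lambda>(i,j). F i j)) \<noteq> 0"
  shows "\<exists>R. \<forall>m<n. \<forall>j<n. (\<Sum>i<n. R m i * F i j) = (if m = j then 1 else 0)"
proof -
  let ?A = "mat n n (\<lambda>(i,j). F i j)"
  have A: "?A \<in> carrier_mat n n" by simp
  from det_non_zero_imp_unit[OF A d, of "()"]
  obtain B where B: "B \<in> carrier_mat n n" and BA: "B * ?A = 1\<^sub>m n"
    unfolding Units_def ring_mat_def by auto
  show ?thesis
  proof (intro exI allI impI)
    fix m j assume m: "m < n" and j: "j < n"
    have "(B * ?A) $$ (m,j) = (if m = j then 1 else 0)" using BA m j by simp
    moreover have "(B * ?A) $$ (m,j) = (\<Sum>i<n. B $$ (m,i) * F i j)"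
      using B m j by (auto simp: scalar_prod_def lessThan_atLeast0 intro!: sum.cong)
    ultimately show "(\<Sum>i<n. B $$ (m,i) * F i j) = (if m = j then 1 else 0)" by simp
  qed
qed

lemma det_prod3:
  fixes F G :: "nat \<Rightarrow> nat \<Rightarrow> real"
  shows "det (mat n n (\<lambda>(i,l). \<Sum>j<n. F i j * d j * G l j)) =
    det (mat n n (\<lambda>(i,j). F i j)) * (\<Prod>j<n. d j) * det (mat n n (\<lambda>(i,j). G i j))"
proof -
  let ?F = "mat n n (\<lambda>(i,j). F i j)" and ?G = "mat n n (\<lambda>(i,j). G i j)"
  have eq: "mat n n (\<lambda>(i,l). \<Sum>j<n. F i j * d j * G l j) = ?F * mat_diag n d * transpose_mat ?G"
    by (rule eq_matI) (auto simp: mat_diag_mult_right[of _ n n] scalar_prod_def lessThan_atLeast0 intro!: sum.cong)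
  have dd: "det (mat_diag n d) = (\<Prod>j<n. d j)"
  proof -
    have "upper_triangular (mat_diag n d)" by (auto simp: upper_triangular_def mat_diag_def)
    then have "det (mat_diag n d) = prod_list (diag_mat (mat_diag n d))"
      using det_upper_triangular mat_diag_dim by blast
    also have "diag_mat (mat_diag n d) = map d [0..<n]"
      by (auto simp: diag_mat_def mat_diag_def intro!: nth_equalityI)
    also have "prod_list (map d [0..<n]) = (\<Prod>j<n. d j)"
      by (simp add: prod.distinct_set_conv_list[symmetric] lessThan_atLeast0)
    finally show ?thesis .
  qed
  have dt: "det (transpose_mat ?G) = det ?G" by (rule det_transpose[of _ n]) simp
  have c1: "?F * mat_diag n d \<in> carrier_mat n n" by (rule mult_carrier_mat[of _ n n]) auto
  show ?thesis unfolding eq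
    by (simp add: det_mult[OF c1, of _] det_mult[of ?F n "mat_diag n d"] dt dd)
qed

lemma det_rowscale:
  fixes F :: "nat \<Rightarrow> nat \<Rightarrow> real"
  shows "det (mat n n (\<lambda>(i,j). r i * F i j)) = (\<Prod>i<n. r i) * det (mat n n (\<lambda>(i,j). F i j))"
proof -
  let ?F = "mat n n (\<lambda>(i,j). F i j)"
  have eq: "mat n n (\<lambda>(i,j). r i * F i j) = mat_diag n r * ?F"
    by (subst mat_diag_mult_left[of _ n n]) (auto intro!: eq_matI)
  have dd: "det (mat_diag n r) = (\<Prod>j<n. r j)"
  proof -
    have "upper_triangular (mat_diag n r)" by (auto simp: upper_triangular_def mat_diag_def)
    then have "det (mat_diag n r) = prod_list (diag_mat (mat_diag n r))"
      using det_upper_triangular mat_diag_dim by blast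
    also have "diag_mat (mat_diag n r) = map r [0..<n]"
      by (auto simp: diag_mat_def mat_diag_def intro!: nth_equalityI)
    also have "prod_list (map r [0..<n]) = (\<Prod>j<n. r j)"
      by (simp add: prod.distinct_set_conv_list[symmetric] lessThan_atLeast0)
    finally show ?thesis .
  qed
  show ?thesis unfolding eq by (subst det_mult[of _ n]) (auto simp: dd)
qed

definition chain :: "(nat \<Rightarrow> nat \<Rightarrow> nat \<Rightarrow> real) \<Rightarrow> nat \<Rightarrow> nat \<Rightarrow> nat list \<Rightarrow> real" where
  "chain f m n xs = (\<Prod>t\<in>{Suc m..n}. f t (xs!(t-1)) (xs!(t-2)))"

definition stoch :: "nat \<Rightarrow> (nat \<Rightarrow> nat \<Rightarrow> nat \<Rightarrow> real) \<Rightarrow> nat \<Rightarrow> nat \<Rightarrow> bool" where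
  "stoch K f a b \<longleftrightarrow> (\<forall>t\<in>{a..b}. \<forall>x'<K. (\<Sum>x<K. f t x x') = 1)"

lemma finite_paths[simp]: "finite (paths K n)"
proof -
  have "paths K n = {xs. set xs \<subseteq> {..<K} \<and> length xs = n}" by (auto simp: paths_def)
  then show ?thesis using finite_lists_length_eq[of "{..<K}" n] by simp
qed

lemma paths_0[simp]: "paths K 0 = {[]}" by (auto simp: paths_def)

lemma paths_Suc: "paths K (Suc n) = (\<lambda>(xs,x). xs@[x]) ` (paths K n \<times> {..<K})"
proof (rule Set.set_eqI)
  fix ys
  show "ys \<in> paths K (Suc n) \<longleftrightarrow> ys \<in> (\<lambda>(xs,x). xs@[x]) ` (paths K n \<times> {..<K})"
  proof
    assume "ys \<in> paths K (Suc n)"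
    then have l: "length ys = Suc n" and s: "set ys \<subseteq> {..<K}" by (auto simp: paths_def)
    then obtain xs x where ys: "ys = xs @ [x]" by (metis length_Suc_conv_rev)
    then show "ys \<in> (\<lambda>(xs,x). xs@[x]) ` (paths K n \<times> {..<K})"
      using l s by (auto simp: paths_def intro!: image_eqI[of _ _ "(xs,x)"])
  qed (auto simp: paths_def)
qed

lemma sum_paths_Suc:
  "(\<Sum>xs\<in>paths K (Suc n). g xs) = (\<Sum>xs\<in>paths K n. \<Sum>x<K. g (xs @ [x]))"
proof -
  have inj: "inj_on (\<lambda>(xs,x). xs@[x]) (paths K n \<times> {..<K})"
    by (auto simp: inj_on_def)
  have "(\<Sum>xs\<in>paths K (Suc n). g xs) = (\<Sum>p\<in>paths K n \<times> {..<K}. g ((\<lambda>(xs,x). xs@[x]) p))"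
    unfolding paths_Suc by (rule sum.reindex[OF inj, unfolded comp_def])
  also have "\<dots> = (\<Sum>xs\<in>paths K n. \<Sum>x<K. g (xs @ [x]))"
    by (simp add: sum.cartesian_product case_prod_unfold)
  finally show ?thesis .
qed

lemma sum_paths_add:
  "(\<Sum>xs\<in>paths K (a + b). g xs) = (\<Sum>u\<in>paths K a. \<Sum>v\<in>paths K b. g (u @ v))"
proof (induction b arbitrary: g)
  case 0
  then show ?case by simp
next
  case (Suc b)
  have "(\<Sum>xs\<in>paths K (a + Suc b). g xs) = (\<Sum>xs\<in>paths K (a + b). \<Sum>x<K. g (xs @ [x]))"
    using sum_paths_Suc[where K=K and n="a+b" and g=g] by simp
  also have "\<dots> = (\<Sum>u\<in>paths K a. \<Sum>v\<in>paths K b. \<Sum>x<K. g (u @ v @ [x]))"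
    using Suc[of "\<lambda>xs. \<Sum>x<K. g (xs @ [x])"] by simp
  also have "\<dots> = (\<Sum>u\<in>paths K a. \<Sum>v\<in>paths K (Suc b). g (u @ v))"
    by (simp add: sum_paths_Suc)
  finally show ?case .
qed

lemma sum_paths_1: "(\<Sum>xs\<in>paths K 1. g xs) = (\<Sum>x<K. g [x])"
  using sum_paths_Suc[where K=K and n=0 and g=g] by simp

lemma paths_append[simp]: "u \<in> paths K a \<Longrightarrow> v \<in> paths K b \<Longrightarrow> u @ v \<in> paths K (a + b)"
  by (auto simp: paths_def)

lemma paths_nth: "xs \<in> paths K n \<Longrightarrow> i < n \<Longrightarrow> xs ! i < K"
  using nth_mem by (fastforce simp: paths_def)

lemma chain_cong:
  assumes "\<forall>i<n. xs ! i = ys ! i"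
  shows "chain f m n xs = chain f m n ys"
  unfolding chain_def using assms by (intro prod.cong) auto

lemma chain_fcong:
  assumes "\<forall>t\<in>{Suc m..n}. f t = g t"
  shows "chain f m n xs = chain g m n xs"
  unfolding chain_def using assms by (intro prod.cong) auto

lemma chain_split:
  assumes "m \<le> n" "n \<le> p"
  shows "chain f m p xs = chain f m n xs * chain f n p xs"
proof -
  have "{Suc m..p} = {Suc m..n} \<union> {Suc n..p}" using assms by auto
  then show ?thesis unfolding chain_def
    by (simp add: prod.union_disjoint[symmetric] ivl_disj_int_two)
qed

lemma chain_Suc:
  assumes "m \<le> n"
  shows "chain f m (Suc n) xs = chain f m n xs * f (Suc n) (xs!n) (xs!(n-1))"
proof -
  have "chain f n (Suc n) xs = f (Suc n) (xs!n) (xs!(n-1))" unfolding chain_def by simp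
  then show ?thesis using chain_split[OF assms, of "Suc n" f xs] by simp
qed

lemma chain_empty[simp]: "chain f m m xs = 1" unfolding chain_def by simp

lemma chain_sum:
  assumes m: "1 \<le> m" and ys: "ys \<in> paths K m" and st: "stoch K f (Suc m) (m + d)"
  shows "(\<Sum>zs\<in>paths K d. chain f m (m + d) (ys @ zs)) = 1"
  using st
proof (induction d)
  case 0
  then show ?case by simp
next
  case (Suc d)
  have st': "stoch K f (Suc m) (m + d)" using Suc.prems by (auto simp: stoch_def)
  have "(\<Sum>zs\<in>paths K (Suc d). chain f m (m + Suc d) (ys @ zs))
      = (\<Sum>zs\<in>paths K d. \<Sum>x<K. chain f m (m + Suc d) (ys @ zs @ [x]))"
    by (simp add: sum_paths_Suc)
  also have "\<dots> = (\<Sum>zs\<in>paths K d. chain f m (m + d) (ys @ zs))"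
  proof (rule sum.cong[OF refl])
    fix zs assume zs: "zs \<in> paths K d"
    have len: "length ys = m" "length zs = d" using ys zs by (auto simp: paths_def)
    have "\<forall>i<m+d. (ys @ zs @ [x]) ! i = (ys @ zs) ! i" for x
      using len by (auto simp: nth_append)
    then have c: "chain f m (m + d) (ys @ zs @ [x]) = chain f m (m + d) (ys @ zs)" for x
      using chain_cong by blast
    have lastK: "(ys @ zs) ! (m + d - 1) < K"
      using paths_nth[OF paths_append[OF ys zs], of "m+d-1"] m by simp
    have e: "(ys @ zs @ [x]) ! (m + d) = x" "(ys @ zs @ [x]) ! (m + d - 1) = (ys @ zs) ! (m + d - 1)" for x
      using len m by (auto simp: nth_append)
    have one: "(\<Sum>x<K. f (Suc (m + d)) x ((ys @ zs) ! (m + d - 1))) = 1"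
      using Suc.prems lastK m by (auto simp: stoch_def)
    have "(\<Sum>x<K. chain f m (m + Suc d) (ys @ zs @ [x]))
        = (\<Sum>x<K. chain f m (m + d) (ys @ zs) * f (Suc (m + d)) x ((ys @ zs) ! (m + d - 1)))"
    proof (rule sum.cong[OF refl])
      fix x
      have "chain f m (m + Suc d) (ys @ zs @ [x]) = chain f m (m + d) (ys @ zs @ [x]) *
          f (Suc (m + d)) ((ys @ zs @ [x]) ! (m + d)) ((ys @ zs @ [x]) ! (m + d - 1))"
        using chain_Suc[of m "m+d" f] by simp
      then show "chain f m (m + Suc d) (ys @ zs @ [x]) = chain f m (m + d) (ys @ zs) * f (Suc (m + d)) x ((ys @ zs) ! (m + d - 1))"
        by (simp only: c e)
    qed
    also have "\<dots> = chain f m (m + d) (ys @ zs) * (\<Sum>x<K. f (Suc (m + d)) x ((ys @ zs) ! (m + d - 1)))"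
      by (rule sum_distrib_left[symmetric])
    also have "\<dots> = chain f m (m + d) (ys @ zs)" by (simp only: one mult_1_right)
    finally show "(\<Sum>x<K. chain f m (m + Suc d) (ys @ zs @ [x])) = chain f m (m + d) (ys @ zs)" .
  qed
  also have "\<dots> = 1" using Suc.IH[OF st'] .
  finally show ?case .
qed

lemma Ppre_chain: "Ppre \<theta> j n xs d = init \<theta> j (xs ! 0) d * chain (trans0 \<theta> j) 1 n xs"
  unfolding Ppre_def chain_def by (simp add: numeral_2_eq_2)

lemma stoch0:
  assumes "valid_pmfs K J T0 T \<theta>" "j < J" "2 \<le> a" "b \<le> T"
  shows "stoch K (trans0 \<theta> j) a b"
  using assms unfolding valid_pmfs_def stoch_def by auto

lemma stoch1:
  assumes "valid_pmfs K J T0 T \<theta>" "j < J" "T0 + 1 \<le> a" "b \<le> T"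
  shows "stoch K (trans1 \<theta> j) a b"
  using assms unfolding valid_pmfs_def stoch_def by auto

definition mixtr :: "nat \<Rightarrow> param \<Rightarrow> nat \<Rightarrow> nat \<Rightarrow> nat \<Rightarrow> nat \<Rightarrow> real" where
  "mixtr T0 \<theta> j t = (if t \<le> T0 then trans0 \<theta> j t else trans1 \<theta> j t)"

lemma stochmix:
  assumes "valid_pmfs K J T0 T \<theta>" "j < J" "2 \<le> a" "b \<le> T"
  shows "stoch K (mixtr T0 \<theta> j) a b"
  using assms unfolding valid_pmfs_def stoch_def mixtr_def by auto

lemma chain_mix:
  assumes "1 \<le> T0" "T0 \<le> T"
  shows "chain (mixtr T0 \<theta> j) 1 T xs = chain (trans0 \<theta> j) 1 T0 xs * (\<Prod>t\<in>{T0+1..T}. trans1 \<theta> j t (xs ! (t - 1)) (xs ! (t - 2)))"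
proof -
  have "chain (mixtr T0 \<theta> j) 1 T xs = chain (mixtr T0 \<theta> j) 1 T0 xs * chain (mixtr T0 \<theta> j) T0 T xs"
    using chain_split assms by blast
  moreover have "chain (mixtr T0 \<theta> j) 1 T0 xs = chain (trans0 \<theta> j) 1 T0 xs"
    by (rule chain_fcong) (auto simp: mixtr_def)
  moreover have "chain (mixtr T0 \<theta> j) T0 T xs = chain (trans1 \<theta> j) T0 T xs"
    by (rule chain_fcong) (auto simp: mixtr_def)
  ultimately show ?thesis by (simp add: chain_def)
qed

lemma pWj1_chain:
  assumes "1 \<le> T0" "T0 \<le> T"
  shows "pWj T0 T \<theta> j xs 1 = init \<theta> j (xs ! 0) 1 * chain (mixtr T0 \<theta> j) 1 T xs"
  using chain_mix[OF assms] by (simp add: pWj_def Ppre_chain)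

lemma pW0cf_chain:
  assumes "1 \<le> T0" "T0 \<le> T"
  shows "pW0cf T0 T \<theta> j xs = Ppre \<theta> j T xs 1"
proof -
  have "chain (trans0 \<theta> j) 1 T xs = chain (trans0 \<theta> j) 1 T0 xs * chain (trans0 \<theta> j) T0 T xs"
    using chain_split assms by blast
  then show ?thesis by (simp add: pW0cf_def Ppre_chain chain_def)
qed

lemma Ppre_marg:
  assumes v: "valid_pmfs K J T0 T \<theta>" and j: "j < J" and ys: "ys \<in> paths K n"
    and n: "1 \<le> n" "n \<le> N" "N \<le> T"
  shows "(\<Sum>zs\<in>paths K (N - n). Ppre \<theta> j N (ys @ zs) d) = Ppre \<theta> j n ys d"
proof -
  have len: "length ys = n" using ys by (simp add: paths_def)
  have eq: "Ppre \<theta> j N (ys @ zs) d = Ppre \<theta> j n ys d * chain (trans0 \<theta> j) n (n + (N - n)) (ys @ zs)" for zs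
  proof -
    have "chain (trans0 \<theta> j) 1 N (ys @ zs) = chain (trans0 \<theta> j) 1 n (ys @ zs) * chain (trans0 \<theta> j) n N (ys @ zs)"
      using chain_split n by blast
    moreover have "chain (trans0 \<theta> j) 1 n (ys @ zs) = chain (trans0 \<theta> j) 1 n ys"
      by (rule chain_cong) (simp add: len nth_append)
    moreover have "(ys @ zs) ! 0 = ys ! 0" using len n by (simp add: nth_append)
    ultimately show ?thesis using n by (simp add: Ppre_chain)
  qed
  have st: "stoch K (trans0 \<theta> j) (Suc n) (n + (N - n))"
    using stoch0[OF v j] n by simp
  show ?thesis
    by (simp add: eq sum_distrib_left[symmetric] chain_sum[OF n(1) ys st])
qed

lemma pWj1_marg:
  assumes v: "valid_pmfs K J T0 T \<theta>" and j: "j < J" and ys: "ys \<in> paths K n"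
    and n: "1 \<le> n" "n \<le> T0" "T0 \<le> T"
  shows "(\<Sum>zs\<in>paths K (T - n). pWj T0 T \<theta> j (ys @ zs) 1) = Ppre \<theta> j n ys 1"
proof -
  have len: "length ys = n" using ys by (simp add: paths_def)
  have T01: "1 \<le> T0" using n by simp
  have eq: "pWj T0 T \<theta> j (ys @ zs) 1 = Ppre \<theta> j n ys 1 * chain (mixtr T0 \<theta> j) n (n + (T - n)) (ys @ zs)" for zs
  proof -
    have "chain (mixtr T0 \<theta> j) 1 T (ys @ zs) = chain (mixtr T0 \<theta> j) 1 n (ys @ zs) * chain (mixtr T0 \<theta> j) n T (ys @ zs)"
      using chain_split n by (meson le_trans)
    moreover have "chain (mixtr T0 \<theta> j) 1 n (ys @ zs) = chain (mixtr T0 \<theta> j) 1 n ys"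
      by (rule chain_cong) (simp add: len nth_append)
    moreover have "chain (mixtr T0 \<theta> j) 1 n ys = chain (trans0 \<theta> j) 1 n ys"
      by (rule chain_fcong) (use n in \<open>auto simp: mixtr_def\<close>)
    moreover have "(ys @ zs) ! 0 = ys ! 0" using len n by (simp add: nth_append)
    moreover have "pWj T0 T \<theta> j (ys @ zs) 1 = init \<theta> j ((ys @ zs) ! 0) 1 * chain (mixtr T0 \<theta> j) 1 T (ys @ zs)"
      by (rule pWj1_chain[OF T01 n(3)])
    ultimately show ?thesis using n by (simp only: Ppre_chain) simp
  qed
  have st: "stoch K (mixtr T0 \<theta> j) (Suc n) (n + (T - n))"
    using stochmix[OF v j] n by simp
  have "(\<Sum>zs\<in>paths K (T - n). pWj T0 T \<theta> j (ys @ zs) 1) = (\<Sum>zs\<in>paths K (T - n). Ppre \<theta> j n ys 1 * chain (mixtr T0 \<theta> j) n (n + (T - n)) (ys @ zs))"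
    by (rule sum.cong[OF refl]) (rule eq)
  also have "\<dots> = Ppre \<theta> j n ys 1 * (\<Sum>zs\<in>paths K (T - n). chain (mixtr T0 \<theta> j) n (n + (T - n)) (ys @ zs))"
    by (rule sum_distrib_left[symmetric])
  also have "\<dots> = Ppre \<theta> j n ys 1" by (simp only: chain_sum[OF n(1) ys st] mult_1_right)
  finally show ?thesis .
qed

lemma Ppre_snoc:
  assumes "length xi1 = k" "1 \<le> k"
  shows "Ppre \<theta> j (k + 1) (xi1 @ [x]) d = Ppre \<theta> j k xi1 d * q21 k \<theta> j x xi1"
proof -
  have "chain (trans0 \<theta> j) 1 (Suc k) (xi1 @ [x]) = chain (trans0 \<theta> j) 1 k (xi1 @ [x]) * trans0 \<theta> j (Suc k) ((xi1 @ [x]) ! k) ((xi1 @ [x]) ! (k - 1))"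
    using chain_Suc assms by blast
  moreover have "chain (trans0 \<theta> j) 1 k (xi1 @ [x]) = chain (trans0 \<theta> j) 1 k xi1"
    by (rule chain_cong) (simp add: assms nth_append)
  moreover have "(xi1 @ [x]) ! 0 = xi1 ! 0" "(xi1 @ [x]) ! k = x" "(xi1 @ [x]) ! (k - 1) = xi1 ! (k - 1)"
    using assms by (auto simp: nth_append)
  ultimately show ?thesis by (simp add: Ppre_chain q21_def)
qed

lemma Ppre_nonneg:
  assumes v: "valid_pmfs K J T0 T \<theta>" and j: "j < J" and xs: "xs \<in> paths K n"
    and n: "1 \<le> n" "n \<le> T" and d: "d \<in> {0,1}"
  shows "Ppre \<theta> j n xs d \<ge> 0"
proof -
  have "xs ! 0 < K" using paths_nth[OF xs] n by simp
  then have "init \<theta> j (xs ! 0) d \<ge> 0" using v j d unfolding valid_pmfs_def by auto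
  moreover have "chain (trans0 \<theta> j) 1 n xs \<ge> 0"
    unfolding chain_def
  proof (rule prod_nonneg)
    fix t assume t: "t \<in> {Suc 1..n}"
    have "xs ! (t - 1) < K" "xs ! (t - 2) < K" using paths_nth[OF xs] t by auto
    then show "trans0 \<theta> j t (xs ! (t - 1)) (xs ! (t - 2)) \<ge> 0"
      using v j t n unfolding valid_pmfs_def by auto
  qed
  ultimately show ?thesis by (simp add: Ppre_chain)
qed

definition wt :: "nat \<Rightarrow> param \<Rightarrow> nat \<Rightarrow> nat list \<Rightarrow> real" where
  "wt T \<theta> j xs = mixw \<theta> j * Ppre \<theta> j T xs 0"

definition cc :: "nat \<Rightarrow> param \<Rightarrow> nat \<Rightarrow> nat list \<Rightarrow> nat \<Rightarrow> nat \<Rightarrow> real" where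
  "cc k \<theta> j xi1 y x = mixw \<theta> j * Ppre \<theta> j k xi1 0 * q21 k \<theta> j y xi1 * q32 k \<theta> j x y"

definition LF :: "nat \<Rightarrow> nat \<Rightarrow> param \<Rightarrow> (nat \<Rightarrow> nat list) \<Rightarrow> nat \<Rightarrow> nat \<Rightarrow> nat \<Rightarrow> real" where
  "LF T k \<theta> b x l j = (if l = 0 then 1 else q43 T k \<theta> j (b (l - 1)) x)"

lemma Lmat_LF: "Lmat J T k \<theta> b x = mat J J (\<lambda>(l,j). LF T k \<theta> b x l j)"
  unfolding Lmat_def LF_def by simp

lemma q43_chain:
  assumes "length ys = k + 2" "ys ! (k + 1) = x"
  shows "q43 T k \<theta> j xi4 x = chain (trans0 \<theta> j) (k + 2) T (ys @ xi4)"
  unfolding q43_def chain_def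
proof (rule prod.cong)
  show "{k + 3..T} = {Suc (k + 2)..T}" by simp
next
  fix t assume t: "t \<in> {Suc (k + 2)..T}"
  have a: "(ys @ xi4) ! (t - 1) = xi4 ! (t - (k + 3))"
    using t assms by (auto simp: nth_append eval_nat_numeral)
  have b: "(ys @ xi4) ! (t - 2) = (if t = k + 3 then x else xi4 ! (t - (k + 4)))"
    using t assms by (auto simp: nth_append eval_nat_numeral)
  show "trans0 \<theta> j t (xi4 ! (t - (k + 3))) (if t = k + 3 then x else xi4 ! (t - (k + 4))) =
        trans0 \<theta> j t ((ys @ xi4) ! (t - 1)) ((ys @ xi4) ! (t - 2))"
    by (simp only: a b)
qed

lemma w_split:
  assumes len: "length xi1 = k" and k: "1 \<le> k" and T: "k + 2 \<le> T"
  shows "Ppre \<theta> j T (xi1 @ [y, x] @ xi4) d = Ppre \<theta> j k xi1 d * q21 k \<theta> j y xi1 * q32 k \<theta> j x y * q43 T k \<theta> j xi4 x"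
proof -
  let ?ys = "xi1 @ [y, x]"
  have ly: "length ?ys = k + 2" using len by simp
  have yk: "?ys ! (k + 1) = x" using len by (simp add: nth_append)
  have c1: "chain (trans0 \<theta> j) 1 T (?ys @ xi4) = chain (trans0 \<theta> j) 1 (k + 2) (?ys @ xi4) * chain (trans0 \<theta> j) (k + 2) T (?ys @ xi4)"
    using chain_split k T by (metis add_leD2 le_add2 le_trans one_le_numeral)
  have c2: "chain (trans0 \<theta> j) 1 (k + 2) (?ys @ xi4) = chain (trans0 \<theta> j) 1 (k + 2) ?ys"
  proof (rule chain_cong, intro allI impI)
    fix i assume "i < k + 2"
    then have "i < k \<or> i = k \<or> i = k + 1" by auto
    then show "(?ys @ xi4) ! i = ?ys ! i" by (auto simp add: nth_append len)
  qed
  have h0: "(?ys @ xi4) ! 0 = ?ys ! 0" using ly by (simp add: nth_append)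
  have "Ppre \<theta> j T (?ys @ xi4) d = Ppre \<theta> j (k + 2) ?ys d * q43 T k \<theta> j xi4 x"
    using c1 c2 h0 q43_chain[OF ly yk, of T \<theta> j xi4] by (simp add: Ppre_chain)
  moreover have "Ppre \<theta> j (k + 2) ?ys d = Ppre \<theta> j (k + 1) (xi1 @ [y]) d * q21 (k + 1) \<theta> j x (xi1 @ [y])"
    using Ppre_snoc[of "xi1 @ [y]" "k + 1" \<theta> j x d] len by simp
  moreover have "Ppre \<theta> j (k + 1) (xi1 @ [y]) d = Ppre \<theta> j k xi1 d * q21 k \<theta> j y xi1"
    using Ppre_snoc[OF len k] by simp
  moreover have "q21 (k + 1) \<theta> j x (xi1 @ [y]) = q32 k \<theta> j x y"
    using len by (simp add: q21_def q32_def nth_append)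
  ultimately show ?thesis by simp
qed

lemma q43_sum:
  assumes v: "valid_pmfs K J T0 T \<theta>" and j: "j < J" and x: "x < K" and T: "k + 2 \<le> T"
  shows "(\<Sum>xi4\<in>paths K (T - k - 2). q43 T k \<theta> j xi4 x) = 1"
proof -
  let ?ys = "replicate (k + 2) x"
  have ys: "?ys \<in> paths K (k + 2)" using x by (auto simp: paths_def)
  have st: "stoch K (trans0 \<theta> j) (Suc (k + 2)) (k + 2 + (T - k - 2))"
    using stoch0[OF v j] T by simp
  have "(\<Sum>xi4\<in>paths K (T - k - 2). q43 T k \<theta> j xi4 x) = (\<Sum>xi4\<in>paths K (T - k - 2). chain (trans0 \<theta> j) (k + 2) (k + 2 + (T - k - 2)) (?ys @ xi4))"
  proof (intro sum.cong refl)
    fix xi4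
    have e: "k + 2 + (T - k - 2) = T" using T by simp
    show "q43 T k \<theta> j xi4 x = chain (trans0 \<theta> j) (k + 2) (k + 2 + (T - k - 2)) (?ys @ xi4)"
      unfolding e by (rule q43_chain) (simp_all add: nth_Cons')
  qed
  also have "\<dots> = 1" by (rule chain_sum[OF _ ys st]) simp
  finally show ?thesis .
qed

lemma pW0_sum: "pW J T0 T \<theta> xs 0 = (\<Sum>j<J. wt T \<theta> j xs)"
  unfolding pW_def pWj_def wt_def by simp

lemma obs_single:
  assumes "length xi1 = k" "1 \<le> k" "k + 2 \<le> T"
  shows "pW J T0 T \<theta> (xi1 @ [y, x] @ xi4) 0 = (\<Sum>j<J. cc k \<theta> j xi1 y x * q43 T k \<theta> j xi4 x)"
  unfolding pW0_sum wt_def cc_def using w_split[OF assms] by (simp add: mult.assoc)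

lemma obs_sum:
  assumes v: "valid_pmfs K J T0 T \<theta>" and "length xi1 = k" "1 \<le> k" "k + 2 \<le> T" and x: "x < K"
  shows "(\<Sum>xi4\<in>paths K (T - k - 2). pW J T0 T \<theta> (xi1 @ [y, x] @ xi4) 0) = (\<Sum>j<J. cc k \<theta> j xi1 y x)"
proof -
  have "(\<Sum>xi4\<in>paths K (T - k - 2). pW J T0 T \<theta> (xi1 @ [y, x] @ xi4) 0)
      = (\<Sum>j<J. cc k \<theta> j xi1 y x * (\<Sum>xi4\<in>paths K (T - k - 2). q43 T k \<theta> j xi4 x))"
  proof -
    have "(\<Sum>xi4\<in>paths K (T - k - 2). pW J T0 T \<theta> (xi1 @ [y, x] @ xi4) 0)
        = (\<Sum>xi4\<in>paths K (T - k - 2). \<Sum>j<J. cc k \<theta> j xi1 y x * q43 T k \<theta> j xi4 x)"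
      by (rule sum.cong[OF refl]) (rule obs_single[OF assms(2-4)])
    also have "\<dots> = (\<Sum>j<J. \<Sum>xi4\<in>paths K (T - k - 2). cc k \<theta> j xi1 y x * q43 T k \<theta> j xi4 x)"
      by (rule sum.swap)
    finally show ?thesis by (simp add: sum_distrib_left)
  qed
  also have "\<dots> = (\<Sum>j<J. cc k \<theta> j xi1 y x)"
    using q43_sum[OF v _ x assms(4)] by simp
  finally show ?thesis .
qed

definition Ob :: "nat \<Rightarrow> nat \<Rightarrow> nat \<Rightarrow> nat \<Rightarrow> nat \<Rightarrow> param \<Rightarrow> (nat \<Rightarrow> nat list) \<Rightarrow> nat list \<Rightarrow> nat \<Rightarrow> nat \<Rightarrow> nat \<Rightarrow> real" where
  "Ob K J T0 T k \<theta> b xi1 y x l = (if l = 0 then (\<Sum>xi4\<in>paths K (T - k - 2). pW J T0 T \<theta> (xi1 @ [y, x] @ xi4) 0)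
      else pW J T0 T \<theta> (xi1 @ [y, x] @ b (l - 1)) 0)"

lemma Ob_eq:
  assumes v: "valid_pmfs K J T0 T \<theta>" and "length xi1 = k" "1 \<le> k" "k + 2 \<le> T" and x: "x < K"
  shows "Ob K J T0 T k \<theta> b xi1 y x l = (\<Sum>j<J. cc k \<theta> j xi1 y x * LF T k \<theta> b x l j)"
  unfolding Ob_def LF_def using obs_sum[OF assms] obs_single[OF assms(2-4)] by simp

lemma sum_single:
  fixes f :: "nat \<Rightarrow> real"
  assumes "r < J" "\<forall>j<J. j \<noteq> r \<longrightarrow> f j = 0"
  shows "(\<Sum>j<J. f j) = f r"
proof -
  have "(\<Sum>j<J. f j) = f r + (\<Sum>j\<in>{..<J} - {r}. f j)"
    using assms(1) by (simp add: sum.remove)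
  also have "(\<Sum>j\<in>{..<J} - {r}. f j) = 0" using assms(2) by (intro sum.neutral) auto
  finally show ?thesis by simp
qed

lemma monomial:
  fixes P :: "nat \<Rightarrow> nat \<Rightarrow> real"
  assumes rows: "\<forall>m<J. \<exists>j<J. P m j \<noteq> 0"
    and cols: "\<forall>j<J. \<forall>m<J. \<forall>m'<J. P m j \<noteq> 0 \<longrightarrow> P m' j \<noteq> 0 \<longrightarrow> m = m'"
  shows "\<exists>\<rho>. bij_betw \<rho> {..<J} {..<J} \<and> (\<forall>m<J. \<forall>j<J. P m j \<noteq> 0 \<longleftrightarrow> j = \<rho> m)"
proof -
  define \<rho> where "\<rho> m = (SOME j. j < J \<and> P m j \<noteq> 0)" for m
  have r: "\<rho> m < J \<and> P m (\<rho> m) \<noteq> 0" if "m < J" for m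
    using someI_ex[OF rows[rule_format, OF that]] unfolding \<rho>_def by blast
  have inj: "inj_on \<rho> {..<J}"
  proof (rule inj_onI)
    fix m m' assume "m \<in> {..<J}" "m' \<in> {..<J}" "\<rho> m = \<rho> m'"
    then show "m = m'" using r cols by (metis lessThan_iff)
  qed
  have sub: "\<rho> ` {..<J} \<subseteq> {..<J}" using r by auto
  have surj: "\<rho> ` {..<J} = {..<J}" by (rule endo_inj_surj[OF _ sub inj]) simp
  have bij: "bij_betw \<rho> {..<J} {..<J}" using inj surj by (simp add: bij_betw_def)
  have "P m j \<noteq> 0 \<longleftrightarrow> j = \<rho> m" if m: "m < J" and j: "j < J" for m j
  proof
    assume pj: "P m j \<noteq> 0"
    from j surj obtain m' where m': "m' < J" "j = \<rho> m'" by (metis imageE lessThan_iff)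
    then have "P m' j \<noteq> 0" using r by simp
    then have "m = m'" using cols pj m m' j by blast
    then show "j = \<rho> m" using m' by simp
  next
    assume "j = \<rho> m" then show "P m j \<noteq> 0" using r m by simp
  qed
  then show ?thesis using bij by blast
qed

lemma eig_alg:
  fixes B1 B2 a1 a2 b1 b2 c1 c2 d1 d2 :: real
  assumes nz: "a1 \<noteq> 0" "a2 \<noteq> 0" "b1 \<noteq> 0" "b2 \<noteq> 0" "c1 \<noteq> 0" "c2 \<noteq> 0" "d1 \<noteq> 0" "d2 \<noteq> 0"
    and e1: "B1 * a1 / c1 = B2 * a2 / c2" and ne: "B1 * a1 / c1 \<noteq> 0"
    and e2: "B1 * b1 / d1 = B2 * b2 / d2"
  shows "c1 * inverse d1 * d2 * inverse c2 = a1 * inverse b1 * b2 * inverse a2"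
proof -
  have B1: "B1 \<noteq> 0" using ne by auto
  have B2: "B2 \<noteq> 0" using ne e1 by auto
  from e1 have f1: "B1 * a1 * c2 = B2 * a2 * c1" using nz by (simp add: field_simps)
  from e2 have f2: "B1 * b1 * d2 = B2 * b2 * d1" using nz by (simp add: field_simps)
  have "(B1 * a1 * c2) * (B2 * b2 * d1) = (B2 * a2 * c1) * (B1 * b1 * d2)" using f1 f2 by simp
  then have "B1 * B2 * (a1 * c2 * b2 * d1) = B1 * B2 * (a2 * c1 * b1 * d2)" by (simp add: algebra_simps)
  then have g: "a1 * c2 * b2 * d1 = a2 * c1 * b1 * d2" using B1 B2 by simp
  show ?thesis using nz g by (simp add: field_simps)
qed

definition AA :: "nat \<Rightarrow> param \<Rightarrow> (nat \<Rightarrow> nat list) \<Rightarrow> nat \<Rightarrow> nat \<Rightarrow> nat \<Rightarrow> real" where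
  "AA k \<theta> a y i j = mixw \<theta> j * Ppre \<theta> j k (a i) 0 * q21 k \<theta> j y (a i)"

lemma cc_AA: "cc k \<theta> j (a i) y x = AA k \<theta> a y i j * q32 k \<theta> j x y"
  unfolding cc_def AA_def by simp

lemma Lbar_AA:
  assumes d: "det (Lbar J k \<theta> a y) \<noteq> 0"
  shows "det (mat J J (\<lambda>(i,j). AA k \<theta> a y i j)) \<noteq> 0"
proof -
  define den where "den i = (\<Sum>m<J. mixw \<theta> m * Ppre \<theta> m k (a i) 0)" for i
  have Lb: "Lbar J k \<theta> a y = mat J J (\<lambda>(i,j). AA k \<theta> a y i j / den i)"
    unfolding Lbar_def lambda1_def tau_def AA_def den_def by (rule cong[of "mat J J"]) (auto simp: fun_eq_iff)
  have dnz: "den i \<noteq> 0" if i: "i < J" for i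
  proof
    assume "den i = 0"
    then have "\<forall>j<J. (\<Sum>i'<J. (if i' = i then 1 else 0) * (AA k \<theta> a y i' j / den i')) = 0"
    proof (intro allI impI)
      fix j assume "j < J"
      have "(\<Sum>i'<J. (if i' = i then 1 else 0) * (AA k \<theta> a y i' j / den i')) = (\<Sum>i'<J. if i' = i then AA k \<theta> a y i' j / den i' else 0)"
        by (intro sum.cong refl) simp
      also have "\<dots> = 0" using i \<open>den i = 0\<close> by (simp add: sum.delta')
      finally show "(\<Sum>i'<J. (if i' = i then 1 else 0) * (AA k \<theta> a y i' j / den i')) = 0" .
    qed
    then have "(if i = i then 1 else 0 :: real) = 0"
      using det_nz_rows_indep[of J "\<lambda>i j. AA k \<theta> a y i j / den i" "\<lambda>i'. if i' = i then 1 else 0" i] d i Lb by simp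
    then show False by simp
  qed
  have "mat J J (\<lambda>(i,j). AA k \<theta> a y i j) = mat J J (\<lambda>(i,j). den i * (AA k \<theta> a y i j / den i))"
    using dnz by (intro eq_matI) auto
  then have "det (mat J J (\<lambda>(i,j). AA k \<theta> a y i j)) = (\<Prod>i<J. den i) * det (Lbar J k \<theta> a y)"
    by (simp only: det_rowscale[of J den "\<lambda>i j. AA k \<theta> a y i j / den i"] Lb)
  moreover have "(\<Prod>i<J. den i) \<noteq> 0" using dnz by simp
  ultimately show ?thesis using d by simp
qed

locale two =
  fixes K J T0 T k :: nat and s p :: param
  assumes k1: "1 \<le> k" and Tk: "k + 3 \<le> T" and T0k: "k + 1 \<le> T0" and T0T: "T0 \<le> T" and J1: "1 \<le> J"
    and vs: "valid_pmfs K J T0 T s" and vp: "valid_pmfs K J T0 T p"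
    and eqW: "\<forall>xs\<in>paths K T. \<forall>d\<in>{0,1}. pW J T0 T p xs d = pW J T0 T s xs d"
    and qpos: "\<forall>j<J. \<forall>x<K. \<forall>y<K. q32 k s j x y > 0"
begin

lemma path4: "xi1 \<in> paths K k \<Longrightarrow> y < K \<Longrightarrow> x < K \<Longrightarrow> xi4 \<in> paths K (T - k - 2) \<Longrightarrow> xi1 @ [y, x] @ xi4 \<in> paths K T"
  using Tk by (auto simp: paths_def)

lemma Ob_same:
  assumes xi1: "xi1 \<in> paths K k" and y: "y < K" and x: "x < K" and b: "\<forall>i<J - 1. b i \<in> paths K (T - k - 2)"
    and l: "l < J"
  shows "Ob K J T0 T k p b xi1 y x l = Ob K J T0 T k s b xi1 y x l"
proof (cases "l = 0")
  case True
  then show ?thesis unfolding Ob_def using eqW path4[OF xi1 y x] by (auto intro!: sum.cong)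
next
  case False
  then have "b (l - 1) \<in> paths K (T - k - 2)" using b l by auto
  then show ?thesis unfolding Ob_def using eqW path4[OF xi1 y x] False by auto
qed

lemma Eqc:
  assumes xi1: "xi1 \<in> paths K k" and y: "y < K" and x: "x < K" and b: "\<forall>i<J - 1. b i \<in> paths K (T - k - 2)"
    and l: "l < J"
  shows "(\<Sum>j<J. cc k p j xi1 y x * LF T k p b x l j) = (\<Sum>j<J. cc k s j xi1 y x * LF T k s b x l j)"
proof -
  have len: "length xi1 = k" using xi1 by (simp add: paths_def)
  have T2: "k + 2 \<le> T" using Tk by simp
  show ?thesis
    using Ob_same[OF assms] Ob_eq[OF vp len k1 T2 x] Ob_eq[OF vs len k1 T2 x] by simp
qed

lemma nonsing_p:
  assumes a: "\<forall>i<J. a i \<in> paths K k" and b: "\<forall>i<J - 1. b i \<in> paths K (T - k - 2)"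
    and y: "y < K" and x: "x < K"
    and dA: "det (mat J J (\<lambda>(i,j). AA k s a y i j)) \<noteq> 0"
    and dL: "det (mat J J (\<lambda>(l,j). LF T k s b x l j)) \<noteq> 0"
  shows "det (mat J J (\<lambda>(i,j). AA k p a y i j)) \<noteq> 0" "\<forall>j<J. q32 k p j x y \<noteq> 0"
    "det (mat J J (\<lambda>(l,j). LF T k p b x l j)) \<noteq> 0"
proof -
  have eqm: "mat J J (\<lambda>(i,l). \<Sum>j<J. AA k p a y i j * q32 k p j x y * LF T k p b x l j)
     = mat J J (\<lambda>(i,l). \<Sum>j<J. AA k s a y i j * q32 k s j x y * LF T k s b x l j)"
  proof (rule eq_matI)
    fix i l assume i: "i < dim_row (mat J J (\<lambda>(i,l). \<Sum>j<J. AA k s a y i j * q32 k s j x y * LF T k s b x l j))"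
      and l: "l < dim_col (mat J J (\<lambda>(i,l). \<Sum>j<J. AA k s a y i j * q32 k s j x y * LF T k s b x l j))"
    then have i': "i < J" and l': "l < J" by auto
    show "mat J J (\<lambda>(i,l). \<Sum>j<J. AA k p a y i j * q32 k p j x y * LF T k p b x l j) $$ (i, l) =
          mat J J (\<lambda>(i,l). \<Sum>j<J. AA k s a y i j * q32 k s j x y * LF T k s b x l j) $$ (i, l)"
      using Eqc[OF a[rule_format, OF i'] y x b l'] i' l' by (simp add: cc_AA)
  qed auto
  have ps: "(\<Prod>j<J. q32 k s j x y) \<noteq> 0" using qpos x y by (simp add: less_imp_neq[symmetric])
  have "det (mat J J (\<lambda>(i,l). \<Sum>j<J. AA k s a y i j * q32 k s j x y * LF T k s b x l j)) \<noteq> 0"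
    unfolding det_prod3 using dA dL ps by simp
  then have "det (mat J J (\<lambda>(i,j). AA k p a y i j)) * (\<Prod>j<J. q32 k p j x y) * det (mat J J (\<lambda>(l,j). LF T k p b x l j)) \<noteq> 0"
    unfolding eqm[symmetric] det_prod3 by simp
  then show "det (mat J J (\<lambda>(i,j). AA k p a y i j)) \<noteq> 0" "\<forall>j<J. q32 k p j x y \<noteq> 0"
    "det (mat J J (\<lambda>(l,j). LF T k p b x l j)) \<noteq> 0" by auto
qed

lemma Bstar:
  assumes a: "\<forall>i<J. a i \<in> paths K k" and b: "\<forall>i<J - 1. b i \<in> paths K (T - k - 2)"
    and y: "y < K" and x: "x < K"
    and R: "\<forall>m<J. \<forall>j<J. (\<Sum>i<J. R m i * AA k s a y i j) = (if m = j then 1 else 0)"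
    and m: "m < J" and l: "l < J"
  shows "(\<Sum>j<J. (\<Sum>i<J. R m i * AA k p a y i j) * q32 k p j x y * LF T k p b x l j) = q32 k s m x y * LF T k s b x l m"
proof -
  have sw: "(\<Sum>j<J. (\<Sum>i<J. R m i * AA k \<theta> a y i j) * q32 k \<theta> j x y * LF T k \<theta> b x l j)
      = (\<Sum>i<J. R m i * (\<Sum>j<J. cc k \<theta> j (a i) y x * LF T k \<theta> b x l j))" for \<theta>
  proof -
    have "(\<Sum>j<J. (\<Sum>i<J. R m i * AA k \<theta> a y i j) * q32 k \<theta> j x y * LF T k \<theta> b x l j)
        = (\<Sum>j<J. \<Sum>i<J. R m i * (cc k \<theta> j (a i) y x * LF T k \<theta> b x l j))"
      by (simp only: sum_distrib_right cc_AA mult.assoc)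
    also have "\<dots> = (\<Sum>i<J. \<Sum>j<J. R m i * (cc k \<theta> j (a i) y x * LF T k \<theta> b x l j))"
      by (rule sum.swap)
    also have "\<dots> = (\<Sum>i<J. R m i * (\<Sum>j<J. cc k \<theta> j (a i) y x * LF T k \<theta> b x l j))"
      by (simp only: sum_distrib_left)
    finally show ?thesis .
  qed
  have "(\<Sum>j<J. (\<Sum>i<J. R m i * AA k p a y i j) * q32 k p j x y * LF T k p b x l j)
      = (\<Sum>i<J. R m i * (\<Sum>j<J. cc k p j (a i) y x * LF T k p b x l j))"
    by (rule sw)
  also have "\<dots> = (\<Sum>i<J. R m i * (\<Sum>j<J. cc k s j (a i) y x * LF T k s b x l j))"
    using Eqc[OF _ y x b l] a by (intro sum.cong refl) simp
  also have "\<dots> = (\<Sum>j<J. (\<Sum>i<J. R m i * AA k s a y i j) * q32 k s j x y * LF T k s b x l j)"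
    by (rule sw[symmetric])
  also have "\<dots> = (\<Sum>j<J. (if m = j then 1 else 0) * q32 k s j x y * LF T k s b x l j)"
    using R m by (intro sum.cong refl) simp
  also have "\<dots> = (\<Sum>j<J. if m = j then q32 k s j x y * LF T k s b x l j else 0)"
    by (intro sum.cong refl) simp
  also have "\<dots> = q32 k s m x y * LF T k s b x l m" using m by (simp add: sum.delta)
  finally show ?thesis .
qed

end

context two begin

lemma calign:
  assumes x: "x < K" and b: "\<forall>i<J - 1. b i \<in> paths K (T - k - 2)"
    and dL: "det (mat J J (\<lambda>(l,j). LF T k s b x l j)) \<noteq> 0"
    and bij: "bij_betw \<rho> {..<J} {..<J}"
    and L: "\<forall>l<J. \<forall>m<J. LF T k p b x l (\<rho> m) = LF T k s b x l m"
    and xi1: "xi1 \<in> paths K k" and y: "y < K" and m: "m < J"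
  shows "cc k p (\<rho> m) xi1 y x = cc k s m xi1 y x"
proof -
  have "\<forall>l<J. (\<Sum>j<J. LF T k s b x l j * (cc k p (\<rho> j) xi1 y x - cc k s j xi1 y x)) = 0"
  proof (intro allI impI)
    fix l assume l: "l < J"
    have "(\<Sum>j<J. cc k p j xi1 y x * LF T k p b x l j) = (\<Sum>j<J. cc k p (\<rho> j) xi1 y x * LF T k p b x l (\<rho> j))"
      by (rule sum.reindex_bij_betw[OF bij, symmetric])
    also have "\<dots> = (\<Sum>j<J. cc k p (\<rho> j) xi1 y x * LF T k s b x l j)"
      using L l by (intro sum.cong refl) simp
    finally have "(\<Sum>j<J. cc k p (\<rho> j) xi1 y x * LF T k s b x l j) = (\<Sum>j<J. cc k s j xi1 y x * LF T k s b x l j)"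
      using Eqc[OF xi1 y x b l] by simp
    then show "(\<Sum>j<J. LF T k s b x l j * (cc k p (\<rho> j) xi1 y x - cc k s j xi1 y x)) = 0"
      by (simp add: algebra_simps sum_subtractf)
  qed
  from det_nz_cols_indep[OF dL this m] show ?thesis by simp
qed

lemma per_x:
  assumes x: "x < K" and s3: "s3 < K" and y1: "y1 < K" and y2: "y2 < K" and z: "z < K"
    and a: "\<forall>i<J. a i \<in> paths K k" and b: "\<forall>i<J - 1. b i \<in> paths K (T - k - 2)"
    and dA1: "det (mat J J (\<lambda>(i,j). AA k s a y1 i j)) \<noteq> 0"
    and dA2: "det (mat J J (\<lambda>(i,j). AA k s a y2 i j)) \<noteq> 0"
    and dLx: "det (mat J J (\<lambda>(l,j). LF T k s b x l j)) \<noteq> 0"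
    and dLz: "det (mat J J (\<lambda>(l,j). LF T k s b z l j)) \<noteq> 0"
    and dL3: "det (mat J J (\<lambda>(l,j). LF T k s b s3 l j)) \<noteq> 0"
    and inj: "inj_on (eigen_entry k s x y1 y2 z) {..<J}"
  shows "\<exists>\<rho>. bij_betw \<rho> {..<J} {..<J} \<and>
     (\<forall>xi1\<in>paths K k. \<forall>y<K. \<forall>xi4\<in>paths K (T - k - 2). \<forall>m<J.
        wt T p (\<rho> m) (xi1 @ [y, x] @ xi4) = wt T s m (xi1 @ [y, x] @ xi4)) \<and>
     (\<forall>xi1\<in>paths K k. \<forall>y<K. \<forall>m<J. cc k p (\<rho> m) xi1 y s3 = cc k s m xi1 y s3)"
proof -
  let ?qs = "\<lambda>j x y. q32 k s j x y" and ?qp = "\<lambda>j x y. q32 k p j x y"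
  note np1x = nonsing_p[OF a b y1 x dA1 dLx]
  note np2x = nonsing_p[OF a b y2 x dA2 dLx]
  note np1z = nonsing_p[OF a b y1 z dA1 dLz]
  note np2z = nonsing_p[OF a b y2 z dA2 dLz]
  obtain R1 where R1: "\<forall>m<J. \<forall>j<J. (\<Sum>i<J. R1 m i * AA k s a y1 i j) = (if m = j then 1 else 0)"
    using det_nz_inverse[OF dA1] by blast
  obtain R2 where R2: "\<forall>m<J. \<forall>j<J. (\<Sum>i<J. R2 m i * AA k s a y2 i j) = (if m = j then 1 else 0)"
    using det_nz_inverse[OF dA2] by blast
  define B1 where "B1 m j = (\<Sum>i<J. R1 m i * AA k p a y1 i j)" for m j
  define B2 where "B2 m j = (\<Sum>i<J. R2 m i * AA k p a y2 i j)" for m j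
  have S1: "(\<Sum>j<J. B1 m j * ?qp j x' y1 * LF T k p b x' l j) = ?qs m x' y1 * LF T k s b x' l m"
    if "x' < K" "m < J" "l < J" for x' m l
    unfolding B1_def by (rule Bstar[OF a b y1 that(1) R1 that(2,3)])
  have S2: "(\<Sum>j<J. B2 m j * ?qp j x' y2 * LF T k p b x' l j) = ?qs m x' y2 * LF T k s b x' l m"
    if "x' < K" "m < J" "l < J" for x' m l
    unfolding B2_def by (rule Bstar[OF a b y2 that(1) R2 that(2,3)])
  define P1 where "P1 m j = B1 m j * ?qp j x y1 / ?qs m x y1" for m j
  define P2 where "P2 m j = B2 m j * ?qp j x y2 / ?qs m x y2" for m j
  define Q1 where "Q1 m j = B1 m j * ?qp j z y1 / ?qs m z y1" for m j
  define Q2 where "Q2 m j = B2 m j * ?qp j z y2 / ?qs m z y2" for m j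
  have divsum: "(\<Sum>j<J. B m j * ?qp j x' y * LF T k p b x' l j) = ?qs m x' y * LF T k s b x' l m \<Longrightarrow>
      ?qs m x' y > 0 \<Longrightarrow> (\<Sum>j<J. (B m j * ?qp j x' y / ?qs m x' y) * LF T k p b x' l j) = LF T k s b x' l m"
    for B m x' y l
  proof -
    assume h: "(\<Sum>j<J. B m j * ?qp j x' y * LF T k p b x' l j) = ?qs m x' y * LF T k s b x' l m"
      and pos: "?qs m x' y > 0"
    have "(\<Sum>j<J. (B m j * ?qp j x' y / ?qs m x' y) * LF T k p b x' l j) = (\<Sum>j<J. B m j * ?qp j x' y * LF T k p b x' l j) / ?qs m x' y"
      by (simp add: sum_divide_distrib)
    also have "\<dots> = LF T k s b x' l m" using h pos by simp
    finally show ?thesis .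
  qed
  have qsp: "?qs m x' y > 0" if "m < J" "x' < K" "y < K" for m x' y using qpos that by blast
  have cP1: "(\<Sum>j<J. P1 m j * LF T k p b x l j) = LF T k s b x l m" if "m < J" "l < J" for m l
    unfolding P1_def by (rule divsum[where B=B1 and m=m and x'=x and y=y1 and l=l, OF S1[OF x that] qsp[OF that(1) x y1]])
  have cP2: "(\<Sum>j<J. P2 m j * LF T k p b x l j) = LF T k s b x l m" if "m < J" "l < J" for m l
    unfolding P2_def by (rule divsum[where B=B2 and m=m and x'=x and y=y2 and l=l, OF S2[OF x that] qsp[OF that(1) x y2]])
  have cQ1: "(\<Sum>j<J. Q1 m j * LF T k p b z l j) = LF T k s b z l m" if "m < J" "l < J" for m l
    unfolding Q1_def by (rule divsum[where B=B1 and m=m and x'=z and y=y1 and l=l, OF S1[OF z that] qsp[OF that(1) z y1]])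
  have cQ2: "(\<Sum>j<J. Q2 m j * LF T k p b z l j) = LF T k s b z l m" if "m < J" "l < J" for m l
    unfolding Q2_def by (rule divsum[where B=B2 and m=m and x'=z and y=y2 and l=l, OF S2[OF z that] qsp[OF that(1) z y2]])
  have uniq: "F1 m j = F2 m j"
    if dd: "det (mat J J (\<lambda>(l,j). LF T k p b x' l j)) \<noteq> 0"
      and h1: "\<forall>l<J. (\<Sum>j<J. F1 m j * LF T k p b x' l j) = LF T k s b x' l m"
      and h2: "\<forall>l<J. (\<Sum>j<J. F2 m j * LF T k p b x' l j) = LF T k s b x' l m"
      and j: "j < J" for F1 F2 :: "nat \<Rightarrow> nat \<Rightarrow> real" and m x' j
  proof -
    have "\<forall>l<J. (\<Sum>j<J. LF T k p b x' l j * (F1 m j - F2 m j)) = 0"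
      using h1 h2 by (simp add: algebra_simps sum_subtractf)
    from det_nz_cols_indep[OF dd this j] show ?thesis by simp
  qed
  have P12: "P1 m j = P2 m j" if "m < J" "j < J" for m j
    using uniq[OF np1x(3), of P1 m P2] cP1 cP2 that by blast
  have Q12: "Q1 m j = Q2 m j" if "m < J" "j < J" for m j
    using uniq[OF np1z(3), of Q1 m Q2] cQ1 cQ2 that by blast
  have eig: "eigen_entry k s x y1 y2 z m = eigen_entry k p x y1 y2 z j"
    if m: "m < J" and j: "j < J" and nz: "P1 m j \<noteq> 0" for m j
    unfolding eigen_entry_def
  proof (rule eig_alg)
    show "?qp j x y1 \<noteq> 0" using np1x(2) j by blast
    show "?qp j x y2 \<noteq> 0" using np2x(2) j by blast
    show "?qp j z y1 \<noteq> 0" using np1z(2) j by blast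
    show "?qp j z y2 \<noteq> 0" using np2z(2) j by blast
    show "?qs m x y1 \<noteq> 0" "?qs m x y2 \<noteq> 0" "?qs m z y1 \<noteq> 0" "?qs m z y2 \<noteq> 0"
      using qsp[OF m] x y1 y2 z by (auto simp: less_imp_neq[symmetric])
    show "B1 m j * ?qp j x y1 / ?qs m x y1 = B2 m j * ?qp j x y2 / ?qs m x y2"
      using P12[OF m j] unfolding P1_def P2_def .
    show "B1 m j * ?qp j x y1 / ?qs m x y1 \<noteq> 0" using nz unfolding P1_def .
    show "B1 m j * ?qp j z y1 / ?qs m z y1 = B2 m j * ?qp j z y2 / ?qs m z y2"
      using Q12[OF m j] unfolding Q1_def Q2_def .
  qed
  have rows: "\<forall>m<J. \<exists>j<J. P1 m j \<noteq> 0"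
  proof (intro allI impI)
    fix m assume m: "m < J"
    show "\<exists>j<J. P1 m j \<noteq> 0"
    proof (rule ccontr)
      assume "\<not> (\<exists>j<J. P1 m j \<noteq> 0)"
      then have "(\<Sum>j<J. P1 m j * LF T k p b x 0 j) = 0" by simp
      moreover have "LF T k s b x 0 m = 1" by (simp add: LF_def)
      ultimately show False using cP1[OF m, of 0] J1 by simp
    qed
  qed
  have cols: "\<forall>j<J. \<forall>m<J. \<forall>m'<J. P1 m j \<noteq> 0 \<longrightarrow> P1 m' j \<noteq> 0 \<longrightarrow> m = m'"
    using eig inj by (metis inj_onD lessThan_iff)
  obtain \<rho> where bij: "bij_betw \<rho> {..<J} {..<J}" and mono: "\<forall>m<J. \<forall>j<J. P1 m j \<noteq> 0 \<longleftrightarrow> j = \<rho> m"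
    using monomial[OF rows cols] by blast
  have rhoJ: "\<rho> m < J" if "m < J" for m using bij that by (auto dest: bij_betw_apply)
  have Pz: "P1 m j = 0" if "m < J" "j < J" "j \<noteq> \<rho> m" for m j using mono that by blast
  have Pone: "P1 m (\<rho> m) * LF T k p b x l (\<rho> m) = LF T k s b x l m" if m: "m < J" and l: "l < J" for m l
  proof -
    have "(\<Sum>j<J. P1 m j * LF T k p b x l j) = P1 m (\<rho> m) * LF T k p b x l (\<rho> m)"
      using Pz[OF m] rhoJ[OF m] by (intro sum_single) auto
    then show ?thesis using cP1[OF m l] by simp
  qed
  have P1one: "P1 m (\<rho> m) = 1" if m: "m < J" for m
    using Pone[OF m, of 0] J1 by (simp add: LF_def)
  have Lx: "\<forall>l<J. \<forall>m<J. LF T k p b x l (\<rho> m) = LF T k s b x l m"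
    using Pone P1one by simp
  have B1z: "B1 m j = 0" if m: "m < J" and j: "j < J" and ne: "j \<noteq> \<rho> m" for m j
  proof -
    have "B1 m j * ?qp j x y1 / ?qs m x y1 = 0" using Pz[OF m j ne] unfolding P1_def .
    moreover have "?qp j x y1 \<noteq> 0" using np1x(2) j by blast
    moreover have "?qs m x y1 \<noteq> 0" using qsp[OF m x y1] by simp
    ultimately show ?thesis by simp
  qed
  have L3: "\<forall>l<J. \<forall>m<J. LF T k p b s3 l (\<rho> m) = LF T k s b s3 l m"
  proof (intro allI impI)
    fix l m assume l: "l < J" and m: "m < J"
    have e: "B1 m (\<rho> m) * ?qp (\<rho> m) s3 y1 * LF T k p b s3 l' (\<rho> m) = ?qs m s3 y1 * LF T k s b s3 l' m"
      if l': "l' < J" for l'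
    proof -
      have "(\<Sum>j<J. B1 m j * ?qp j s3 y1 * LF T k p b s3 l' j) = B1 m (\<rho> m) * ?qp (\<rho> m) s3 y1 * LF T k p b s3 l' (\<rho> m)"
        using B1z[OF m] rhoJ[OF m] by (intro sum_single) auto
      then show ?thesis using S1[OF s3 m l'] by simp
    qed
    have c: "B1 m (\<rho> m) * ?qp (\<rho> m) s3 y1 = ?qs m s3 y1" using e[of 0] J1 by (simp add: LF_def)
    have "?qs m s3 y1 \<noteq> 0" using qsp[OF m s3 y1] by simp
    then show "LF T k p b s3 l (\<rho> m) = LF T k s b s3 l m" using e[OF l] c by simp
  qed
  have c3: "\<forall>xi1\<in>paths K k. \<forall>y<K. \<forall>m<J. cc k p (\<rho> m) xi1 y s3 = cc k s m xi1 y s3"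
    using calign[OF s3 b dL3 bij L3] by blast
  have cx: "cc k p (\<rho> m) xi1 y x = cc k s m xi1 y x" if "xi1 \<in> paths K k" "y < K" "m < J" for xi1 y m
    using calign[OF x b dLx bij Lx that] .
  have q43a: "q43 T k p (\<rho> m) xi4 x = q43 T k s m xi4 x" if xi4: "xi4 \<in> paths K (T - k - 2)" and m: "m < J" for xi4 m
  proof -
    have "\<forall>i<J. (\<Sum>j<J. AA k s a y1 i j * (?qs j x y1 * (q43 T k p (\<rho> j) xi4 x - q43 T k s j xi4 x))) = 0"
    proof (intro allI impI)
      fix i assume i: "i < J"
      have ai: "a i \<in> paths K k" using a i by simp
      have len: "length (a i) = k" using ai by (simp add: paths_def)
      have "pW J T0 T p (a i @ [y1, x] @ xi4) 0 = pW J T0 T s (a i @ [y1, x] @ xi4) 0"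
        using eqW path4[OF ai y1 x xi4] by simp
      then have "(\<Sum>j<J. cc k p j (a i) y1 x * q43 T k p j xi4 x) = (\<Sum>j<J. cc k s j (a i) y1 x * q43 T k s j xi4 x)"
        using obs_single[OF len k1, of T J T0 p y1 x xi4] obs_single[OF len k1, of T J T0 s y1 x xi4] Tk by simp
      moreover have "(\<Sum>j<J. cc k p j (a i) y1 x * q43 T k p j xi4 x) = (\<Sum>j<J. cc k s j (a i) y1 x * q43 T k p (\<rho> j) xi4 x)"
      proof -
        have "(\<Sum>j<J. cc k p j (a i) y1 x * q43 T k p j xi4 x) = (\<Sum>j<J. cc k p (\<rho> j) (a i) y1 x * q43 T k p (\<rho> j) xi4 x)"
          by (rule sum.reindex_bij_betw[OF bij, symmetric])
        also have "\<dots> = (\<Sum>j<J. cc k s j (a i) y1 x * q43 T k p (\<rho> j) xi4 x)"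
          using cx[OF ai y1] by (intro sum.cong refl) simp
        finally show ?thesis .
      qed
      ultimately have "(\<Sum>j<J. cc k s j (a i) y1 x * (q43 T k p (\<rho> j) xi4 x - q43 T k s j xi4 x)) = 0"
        by (simp add: algebra_simps sum_subtractf)
      then show "(\<Sum>j<J. AA k s a y1 i j * (?qs j x y1 * (q43 T k p (\<rho> j) xi4 x - q43 T k s j xi4 x))) = 0"
        by (simp add: cc_AA mult.assoc)
    qed
    from det_nz_cols_indep[OF dA1 this m]
    show ?thesis using qsp[OF m x y1] by simp
  qed
  have wa: "\<forall>xi1\<in>paths K k. \<forall>y<K. \<forall>xi4\<in>paths K (T - k - 2). \<forall>m<J.
        wt T p (\<rho> m) (xi1 @ [y, x] @ xi4) = wt T s m (xi1 @ [y, x] @ xi4)"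
  proof (intro ballI allI impI)
    fix xi1 y xi4 m assume xi1: "xi1 \<in> paths K k" and y: "y < K" and xi4: "xi4 \<in> paths K (T - k - 2)" and m: "m < J"
    have len: "length xi1 = k" using xi1 by (simp add: paths_def)
    have T2: "k + 2 \<le> T" using Tk by simp
    have "wt T \<theta> j (xi1 @ [y, x] @ xi4) = cc k \<theta> j xi1 y x * q43 T k \<theta> j xi4 x" for \<theta> j
      unfolding wt_def cc_def using w_split[OF len k1 T2] by (simp add: mult.assoc)
    then show "wt T p (\<rho> m) (xi1 @ [y, x] @ xi4) = wt T s m (xi1 @ [y, x] @ xi4)"
      using cx[OF xi1 y m] q43a[OF xi4 m] by simp
  qed
  show ?thesis using bij wa c3 by blast
qed

end

lemma decomp4:
  assumes "length xs = T" "k + 2 \<le> T"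
  shows "xs = take k xs @ [xs ! k, xs ! (k + 1)] @ drop (k + 2) xs"
proof -
  have "drop k xs = xs ! k # drop (Suc k) xs" using assms by (simp add: Cons_nth_drop_Suc)
  moreover have "drop (Suc k) xs = xs ! (Suc k) # drop (Suc (Suc k)) xs" using assms by (simp add: Cons_nth_drop_Suc)
  ultimately have "drop k xs = [xs ! k, xs ! (k + 1)] @ drop (k + 2) xs" by simp
  then show ?thesis by (metis append_take_drop_id)
qed

context two begin

lemma walign:
  assumes IDa: "ID_a K J T k s"
  shows "\<exists>\<rho>. bij_betw \<rho> {..<J} {..<J} \<and> (\<forall>xs\<in>paths K T. \<forall>m<J. wt T p (\<rho> m) xs = wt T s m xs)"
proof -
  obtain s3 where s3: "s3 < K" and H: "\<forall>\<xi>3<K. \<exists>chk2<K. \<exists>bar2<K. \<exists>bar3<K. \<exists>a b.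
        (\<forall>i<J. a i \<in> paths K k) \<and> (\<forall>i<J - 1. b i \<in> paths K (T - k - 2)) \<and>
        det (Lbar J k s a chk2) \<noteq> 0 \<and> det (Lbar J k s a bar2) \<noteq> 0 \<and>
        det (Lmat J T k s b \<xi>3) \<noteq> 0 \<and> det (Lmat J T k s b s3) \<noteq> 0 \<and>
        det (Lmat J T k s b bar3) \<noteq> 0 \<and>
        inj_on (eigen_entry k s \<xi>3 chk2 bar2 bar3) {..<J}"
    using IDa unfolding ID_a_def by blast
  define W where "W x \<rho> \<longleftrightarrow> (\<forall>xi1\<in>paths K k. \<forall>y<K. \<forall>xi4\<in>paths K (T - k - 2). \<forall>m<J.
        wt T p (\<rho> m) (xi1 @ [y, x] @ xi4) = wt T s m (xi1 @ [y, x] @ xi4))" for x and \<rho> :: "nat \<Rightarrow> nat"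
  define C where "C \<rho> \<longleftrightarrow> (\<forall>xi1\<in>paths K k. \<forall>y<K. \<forall>m<J. cc k p (\<rho> m) xi1 y s3 = cc k s m xi1 y s3)" for \<rho> :: "nat \<Rightarrow> nat"
  have ex: "\<exists>\<rho>. bij_betw \<rho> {..<J} {..<J} \<and> W x \<rho> \<and> C \<rho>" if x: "x < K" for x
  proof -
    from H x obtain y1 y2 z a b where y1: "y1 < K" and y2: "y2 < K" and z: "z < K"
      and a: "\<forall>i<J. a i \<in> paths K k" and b: "\<forall>i<J - 1. b i \<in> paths K (T - k - 2)"
      and d1: "det (Lbar J k s a y1) \<noteq> 0" and d2: "det (Lbar J k s a y2) \<noteq> 0"
      and d3: "det (Lmat J T k s b x) \<noteq> 0" and d4: "det (Lmat J T k s b s3) \<noteq> 0"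
      and d5: "det (Lmat J T k s b z) \<noteq> 0" and inj: "inj_on (eigen_entry k s x y1 y2 z) {..<J}"
      by blast
    show ?thesis
      using per_x[OF x s3 y1 y2 z a b Lbar_AA[OF d1] Lbar_AA[OF d2]] d3 d4 d5 inj
      unfolding W_def C_def Lmat_LF by blast
  qed
  then obtain Rf where Rf: "\<forall>x<K. bij_betw (Rf x) {..<J} {..<J} \<and> W x (Rf x) \<and> C (Rf x)"
    by metis
  have dist: "m = m'" if m: "m < J" and m': "m' < J" and eq: "\<forall>xi1\<in>paths K k. \<forall>y<K. cc k s m xi1 y s3 = cc k s m' xi1 y s3" for m m'
  proof (rule ccontr)
    assume ne: "m \<noteq> m'"
    from H s3 obtain y1 a where y1: "y1 < K" and a: "\<forall>i<J. a i \<in> paths K k"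
      and d1: "det (Lbar J k s a y1) \<noteq> 0" by blast
    define v where "v j = (if j = m then q32 k s m s3 y1 else 0) - (if j = m' then q32 k s m' s3 y1 else 0)" for j
    have "\<forall>i<J. (\<Sum>j<J. AA k s a y1 i j * v j) = 0"
    proof (intro allI impI)
      fix i assume i: "i < J"
      have "(\<Sum>j<J. AA k s a y1 i j * v j) = (\<Sum>j<J. if j = m then AA k s a y1 i j * q32 k s m s3 y1 else 0) - (\<Sum>j<J. if j = m' then AA k s a y1 i j * q32 k s m' s3 y1 else 0)"
        unfolding v_def sum_subtractf[symmetric] by (intro sum.cong refl) (simp add: right_diff_distrib)
      also have "\<dots> = cc k s m (a i) y1 s3 - cc k s m' (a i) y1 s3"
        using m m' by (simp add: cc_AA)
      also have "\<dots> = 0" using eq a i y1 by simp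
      finally show "(\<Sum>j<J. AA k s a y1 i j * v j) = 0" .
    qed
    from det_nz_cols_indep[OF Lbar_AA[OF d1] this m] have "v m = 0" .
    then have "q32 k s m s3 y1 = 0" using ne unfolding v_def by simp
    then show False using qpos m s3 y1 by fastforce
  qed
  define \<rho> where "\<rho> = Rf s3"
  have bij: "bij_betw \<rho> {..<J} {..<J}" using Rf s3 unfolding \<rho>_def by blast
  have same: "Rf x m = \<rho> m" if x: "x < K" and m: "m < J" for x m
  proof -
    have bx: "bij_betw (Rf x) {..<J} {..<J}" using Rf x by blast
    have jJ: "Rf x m \<in> {..<J}" using bx m by (auto dest: bij_betw_apply)
    then obtain m' where m': "m' < J" "\<rho> m' = Rf x m" using bij by (metis bij_betw_iff_bijections lessThan_iff)
    have "\<forall>xi1\<in>paths K k. \<forall>y<K. cc k s m xi1 y s3 = cc k s m' xi1 y s3"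
    proof (intro ballI allI impI)
      fix xi1 y assume "xi1 \<in> paths K k" "y < K"
      then have "cc k p (Rf x m) xi1 y s3 = cc k s m xi1 y s3" "cc k p (\<rho> m') xi1 y s3 = cc k s m' xi1 y s3"
        using Rf x m m' s3 unfolding C_def \<rho>_def by blast+
      then show "cc k s m xi1 y s3 = cc k s m' xi1 y s3" using m' by simp
    qed
    then have "m = m'" using dist m m' by blast
    then show ?thesis using m' by simp
  qed
  have "\<forall>xs\<in>paths K T. \<forall>m<J. wt T p (\<rho> m) xs = wt T s m xs"
  proof (intro ballI allI impI)
    fix xs m assume xs: "xs \<in> paths K T" and m: "m < J"
    have len: "length xs = T" using xs by (simp add: paths_def)
    have T2: "k + 2 \<le> T" using Tk by simp
    have dec: "xs = take k xs @ [xs ! k, xs ! (k + 1)] @ drop (k + 2) xs" by (rule decomp4[OF len T2])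
    have p1: "take k xs \<in> paths K k" using xs T2 by (auto simp: paths_def dest: in_set_takeD)
    have p2: "xs ! k < K" "xs ! (k + 1) < K" using paths_nth[OF xs] T2 by auto
    have p3: "drop (k + 2) xs \<in> paths K (T - k - 2)" using xs by (auto simp: paths_def dest: in_set_dropD)
    have "W (xs ! (k + 1)) (Rf (xs ! (k + 1)))" using Rf p2 by blast
    then have "wt T p (Rf (xs ! (k + 1)) m) (take k xs @ [xs ! k, xs ! (k + 1)] @ drop (k + 2) xs)
        = wt T s m (take k xs @ [xs ! k, xs ! (k + 1)] @ drop (k + 2) xs)"
      unfolding W_def using p1 p2 p3 m by blast
    then show "wt T p (\<rho> m) xs = wt T s m xs" using same[OF p2(2) m] dec by simp
  qed
  then show ?thesis using bij by blast
qed

end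

lemma model_facts:
  assumes "model K J T0 T \<epsilon> \<theta>" "1 \<le> J"
  shows "valid_pmfs K J T0 T \<theta>" "\<epsilon> \<le> 1 - \<epsilon>" "overlap K J T0 \<epsilon> \<theta>"
    "\<epsilon> > 0 \<Longrightarrow> \<forall>j<J. mixw \<theta> j > 0"
proof -
  show "valid_pmfs K J T0 T \<theta>" "overlap K J T0 \<epsilon> \<theta>" using assms unfolding model_def by auto
  have it: "\<forall>j<J. \<epsilon> \<le> mixw \<theta> j \<and> mixw \<theta> j \<le> 1 - \<epsilon>" using assms unfolding model_def in_Theta_def by auto
  then show "\<epsilon> \<le> 1 - \<epsilon>" using assms(2) by force
  show "\<epsilon> > 0 \<Longrightarrow> \<forall>j<J. mixw \<theta> j > 0" using it by force
qed

lemma overlap0: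
  assumes m: "model K J T0 T \<epsilon> \<theta>" and J: "1 \<le> J" and eps: "\<epsilon> > 0" and j: "j < J"
    and xi1: "xi1 \<in> paths K k" and k: "1 \<le> k" "k \<le> T0" "T0 \<le> T"
    and z: "Ppre \<theta> j k xi1 0 = 0"
  shows "Ppre \<theta> j k xi1 1 = 0"
proof -
  note v = model_facts(1)[OF m J]
  have e1: "\<epsilon> \<le> 1 - \<epsilon>" using model_facts(2)[OF m J] .
  have ov: "overlap K J T0 \<epsilon> \<theta>" using model_facts(3)[OF m J] .
  have nn: "Ppre \<theta> j T0 (xi1 @ zs) d \<ge> 0" if "zs \<in> paths K (T0 - k)" "d \<in> {0,1}" for zs d
    using Ppre_nonneg[OF v j _ _ _ that(2)] paths_append[OF xi1 that(1)] k by simp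
  have s0: "(\<Sum>zs\<in>paths K (T0 - k). Ppre \<theta> j T0 (xi1 @ zs) 0) = 0"
    using Ppre_marg[OF v j xi1 k(1,2,3)] z by simp
  have z0: "Ppre \<theta> j T0 (xi1 @ zs) 0 = 0" if zs: "zs \<in> paths K (T0 - k)" for zs
    using s0 sum_nonneg_eq_0_iff[of "paths K (T0 - k)" "\<lambda>zs. Ppre \<theta> j T0 (xi1 @ zs) 0"] nn zs by auto
  have z1: "Ppre \<theta> j T0 (xi1 @ zs) 1 = 0" if zs: "zs \<in> paths K (T0 - k)" for zs
  proof -
    have pth: "xi1 @ zs \<in> paths K T0" using paths_append[OF xi1 zs] k by simp
    have "Ppre \<theta> j T0 (xi1 @ zs) 1 \<le> (1 - \<epsilon>) * (Ppre \<theta> j T0 (xi1 @ zs) 0 + Ppre \<theta> j T0 (xi1 @ zs) 1)"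
      using ov j pth unfolding overlap_def by blast
    then have "\<epsilon> * Ppre \<theta> j T0 (xi1 @ zs) 1 \<le> 0" using z0[OF zs] by (simp add: algebra_simps)
    then have "Ppre \<theta> j T0 (xi1 @ zs) 1 \<le> 0" using eps by (simp add: mult_le_0_iff)
    then show ?thesis using nn[OF zs, of 1] by simp
  qed
  have "Ppre \<theta> j k xi1 1 = (\<Sum>zs\<in>paths K (T0 - k). Ppre \<theta> j T0 (xi1 @ zs) 1)"
    using Ppre_marg[OF v j xi1 k(1,2,3)] by simp
  also have "\<dots> = 0" using z1 by simp
  finally show ?thesis .
qed

locale three = two +
  fixes \<epsilon> :: real
  assumes eps: "\<epsilon> > 0" and ms: "model K J T0 T \<epsilon> s" and mp: "model K J T0 T \<epsilon> p"
    and IDa: "ID_a K J T k s" and IDc: "ID_c K J k s"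
begin

definition \<rho> where "\<rho> = (SOME \<rho>. bij_betw \<rho> {..<J} {..<J} \<and> (\<forall>xs\<in>paths K T. \<forall>m<J. wt T p (\<rho> m) xs = wt T s m xs))"

lemma rho: "bij_betw \<rho> {..<J} {..<J}" "\<forall>xs\<in>paths K T. \<forall>m<J. wt T p (\<rho> m) xs = wt T s m xs"
  using someI_ex[OF walign[OF IDa]] unfolding \<rho>_def by blast+

lemma rhoJ: "m < J \<Longrightarrow> \<rho> m < J" using rho(1) by (auto dest: bij_betw_apply)

lemma reidx: "(\<Sum>j<J. f j) = (\<Sum>m<J. f (\<rho> m))"
  by (rule sum.reindex_bij_betw[OF rho(1), symmetric])

lemma W_marg:
  assumes v: "valid_pmfs K J T0 T \<theta>" and j: "j < J" and xi1: "xi1 \<in> paths K k"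
  shows "(\<Sum>zs\<in>paths K (T - k). wt T \<theta> j (xi1 @ zs)) = mixw \<theta> j * Ppre \<theta> j k xi1 0"
  unfolding wt_def sum_distrib_left[symmetric] using Ppre_marg[OF v j xi1 k1, where N=T and d=0] Tk by simp

lemma V_marg:
  assumes v: "valid_pmfs K J T0 T \<theta>" and j: "j < J" and xi1: "xi1 \<in> paths K k" and x: "x < K"
  shows "(\<Sum>zs\<in>paths K (T - (k + 1)). wt T \<theta> j ((xi1 @ [x]) @ zs)) = mixw \<theta> j * Ppre \<theta> j k xi1 0 * q21 k \<theta> j x xi1"
proof -
  have p: "xi1 @ [x] \<in> paths K (k + 1)" using xi1 x by (auto simp: paths_def)
  have len: "length xi1 = k" using xi1 by (simp add: paths_def)
  show ?thesis
    unfolding wt_def sum_distrib_left[symmetric] using Ppre_marg[OF v j p, where N=T and d=0] Tk Ppre_snoc[OF len k1] by simp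
qed

lemma D1_obs:
  assumes v: "valid_pmfs K J T0 T \<theta>" and xi1: "xi1 \<in> paths K k" and x: "x < K"
  shows "(\<Sum>zs\<in>paths K (T - (k + 1)). pW J T0 T \<theta> ((xi1 @ [x]) @ zs) 1) = (\<Sum>j<J. mixw \<theta> j * Ppre \<theta> j k xi1 1 * q21 k \<theta> j x xi1)"
proof -
  have p: "xi1 @ [x] \<in> paths K (k + 1)" using xi1 x by (auto simp: paths_def)
  have len: "length xi1 = k" using xi1 by (simp add: paths_def)
  have "(\<Sum>zs\<in>paths K (T - (k + 1)). pW J T0 T \<theta> ((xi1 @ [x]) @ zs) 1)
      = (\<Sum>j<J. mixw \<theta> j * (\<Sum>zs\<in>paths K (T - (k + 1)). pWj T0 T \<theta> j ((xi1 @ [x]) @ zs) 1))"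
    unfolding pW_def by (simp add: sum.swap[of _ "paths K _"] sum_distrib_left)
  also have "\<dots> = (\<Sum>j<J. mixw \<theta> j * Ppre \<theta> j (k + 1) (xi1 @ [x]) 1)"
    using pWj1_marg[OF v _ p] T0k T0T k1 by simp
  also have "\<dots> = (\<Sum>j<J. mixw \<theta> j * Ppre \<theta> j k xi1 1 * q21 k \<theta> j x xi1)"
    using Ppre_snoc[OF len k1] by (simp add: mult.assoc)
  finally show ?thesis .
qed

lemma WA:
  assumes xi1: "xi1 \<in> paths K k" and m: "m < J"
  shows "mixw p (\<rho> m) * Ppre p (\<rho> m) k xi1 0 = mixw s m * Ppre s m k xi1 0"
proof -
  have "(\<Sum>zs\<in>paths K (T - k). wt T p (\<rho> m) (xi1 @ zs)) = (\<Sum>zs\<in>paths K (T - k). wt T s m (xi1 @ zs))"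
  proof (intro sum.cong refl)
    fix zs assume "zs \<in> paths K (T - k)"
    then have "xi1 @ zs \<in> paths K T" using paths_append[OF xi1] Tk by fastforce
    then show "wt T p (\<rho> m) (xi1 @ zs) = wt T s m (xi1 @ zs)" using rho(2) m by blast
  qed
  then show ?thesis using W_marg[OF vp rhoJ[OF m] xi1] W_marg[OF vs m xi1] by simp
qed

lemma VA:
  assumes xi1: "xi1 \<in> paths K k" and m: "m < J" and x: "x < K"
  shows "mixw p (\<rho> m) * Ppre p (\<rho> m) k xi1 0 * q21 k p (\<rho> m) x xi1 = mixw s m * Ppre s m k xi1 0 * q21 k s m x xi1"
proof -
  have "(\<Sum>zs\<in>paths K (T - (k + 1)). wt T p (\<rho> m) ((xi1 @ [x]) @ zs)) = (\<Sum>zs\<in>paths K (T - (k + 1)). wt T s m ((xi1 @ [x]) @ zs))"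
  proof (intro sum.cong refl)
    fix zs assume zs: "zs \<in> paths K (T - (k + 1))"
    have p: "xi1 @ [x] \<in> paths K (k + 1)" using xi1 x by (auto simp: paths_def)
    have "(xi1 @ [x]) @ zs \<in> paths K T" using paths_append[OF p zs] Tk by simp
    then show "wt T p (\<rho> m) ((xi1 @ [x]) @ zs) = wt T s m ((xi1 @ [x]) @ zs)" using rho(2) m by blast
  qed
  then show ?thesis using V_marg[OF vp rhoJ[OF m] xi1 x] V_marg[OF vs m xi1 x] by simp
qed

end

context three begin

lemma mpos: "\<forall>j<J. mixw s j > 0" "\<forall>j<J. mixw p j > 0"
  using model_facts(4)[OF ms J1 eps] model_facts(4)[OF mp J1 eps] by auto

lemma U_eq_rW:
  assumes m: "model K J T0 T \<epsilon> \<theta>" and j: "j < J" and xi1: "xi1 \<in> paths K k"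
  shows "mixw \<theta> j * Ppre \<theta> j k xi1 1 = (mixw \<theta> j * Ppre \<theta> j k xi1 1 / (mixw \<theta> j * Ppre \<theta> j k xi1 0)) * (mixw \<theta> j * Ppre \<theta> j k xi1 0)"
proof (cases "mixw \<theta> j * Ppre \<theta> j k xi1 0 = 0")
  case True
  have "mixw \<theta> j > 0" using model_facts(4)[OF m J1 eps] j by blast
  then have "Ppre \<theta> j k xi1 0 = 0" using True by simp
  then have "Ppre \<theta> j k xi1 1 = 0" using overlap0[OF m J1 eps j xi1 k1] T0k T0T by simp
  then show ?thesis by simp
qed simp

lemma UA:
  assumes xi1: "xi1 \<in> paths K k" and m: "m < J"
  shows "mixw p (\<rho> m) * Ppre p (\<rho> m) k xi1 1 = mixw s m * Ppre s m k xi1 1"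
proof -
  define Wf where "Wf \<theta> j = mixw \<theta> j * Ppre \<theta> j k xi1 0" for \<theta> j
  define Uf where "Uf \<theta> j = mixw \<theta> j * Ppre \<theta> j k xi1 1" for \<theta> j
  define r where "r \<theta> j = Uf \<theta> j / Wf \<theta> j" for \<theta> j
  have Us: "Uf s j = r s j * Wf s j" if "j < J" for j
    unfolding Uf_def r_def Wf_def using U_eq_rW[OF ms that xi1] .
  have Up: "Uf p j = r p j * Wf p j" if "j < J" for j
    unfolding Uf_def r_def Wf_def using U_eq_rW[OF mp that xi1] .
  obtain c where c: "\<forall>i<J. c i < K" and dc: "det (mat J J (\<lambda>(i,j). q21 k s j (c i) xi1)) \<noteq> 0"
    using IDc xi1 unfolding ID_c_def by blast
  have "\<forall>i<J. (\<Sum>m<J. q21 k s m (c i) xi1 * (Wf s m * (r p (\<rho> m) - r s m))) = 0"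
  proof (intro allI impI)
    fix i assume i: "i < J"
    have x: "c i < K" using c i by simp
    have "(\<Sum>zs\<in>paths K (T - (k + 1)). pW J T0 T p ((xi1 @ [c i]) @ zs) 1) = (\<Sum>zs\<in>paths K (T - (k + 1)). pW J T0 T s ((xi1 @ [c i]) @ zs) 1)"
    proof (intro sum.cong refl)
      fix zs assume zs: "zs \<in> paths K (T - (k + 1))"
      have pp: "xi1 @ [c i] \<in> paths K (k + 1)" using xi1 x by (auto simp: paths_def)
      have "(xi1 @ [c i]) @ zs \<in> paths K T" using paths_append[OF pp zs] Tk by simp
      then show "pW J T0 T p ((xi1 @ [c i]) @ zs) 1 = pW J T0 T s ((xi1 @ [c i]) @ zs) 1" using eqW by simp
    qed
    then have e: "(\<Sum>j<J. Uf p j * q21 k p j (c i) xi1) = (\<Sum>j<J. Uf s j * q21 k s j (c i) xi1)"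
      unfolding Uf_def using D1_obs[OF vp xi1 x] D1_obs[OF vs xi1 x] by simp
    have "(\<Sum>j<J. Uf p j * q21 k p j (c i) xi1) = (\<Sum>m<J. Uf p (\<rho> m) * q21 k p (\<rho> m) (c i) xi1)"
      by (rule reidx)
    also have "\<dots> = (\<Sum>m<J. r p (\<rho> m) * (Wf p (\<rho> m) * q21 k p (\<rho> m) (c i) xi1))"
      using Up rhoJ by (intro sum.cong refl) simp
    also have "\<dots> = (\<Sum>m<J. r p (\<rho> m) * (Wf s m * q21 k s m (c i) xi1))"
      using VA[OF xi1 _ x] unfolding Wf_def by (intro sum.cong refl) simp
    finally have e1: "(\<Sum>j<J. Uf p j * q21 k p j (c i) xi1) = (\<Sum>m<J. r p (\<rho> m) * (Wf s m * q21 k s m (c i) xi1))" .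
    have e2: "(\<Sum>j<J. Uf s j * q21 k s j (c i) xi1) = (\<Sum>m<J. r s m * (Wf s m * q21 k s m (c i) xi1))"
      using Us by (intro sum.cong refl) simp
    show "(\<Sum>m<J. q21 k s m (c i) xi1 * (Wf s m * (r p (\<rho> m) - r s m))) = 0"
      using e e1 e2 by (simp add: algebra_simps sum_subtractf)
  qed
  from det_nz_cols_indep[OF dc this m] have "Wf s m * (r p (\<rho> m) - r s m) = 0" .
  then have "r p (\<rho> m) * Wf s m = r s m * Wf s m" by (simp add: algebra_simps)
  moreover have "Wf p (\<rho> m) = Wf s m" unfolding Wf_def using WA[OF xi1 m] .
  ultimately have "Uf p (\<rho> m) = Uf s m" using Up[OF rhoJ[OF m]] Us[OF m] by simp
  then show ?thesis unfolding Uf_def .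
qed

end

lemma att_form:
  assumes v: "valid_pmfs K J T0 T \<theta>" and T0: "1 \<le> T0" "T0 \<le> T"
  shows "att K J T0 T \<theta> t c =
    ((\<Sum>xs\<in>paths K T. if xs ! (t - 1) = c then pW J T0 T \<theta> xs 1 else 0)
     - (\<Sum>xs\<in>paths K T. if xs ! (t - 1) = c then (\<Sum>j<J. mixw \<theta> j * pW0cf T0 T \<theta> j xs) else 0))
    / (\<Sum>j<J. mixw \<theta> j * prD1 K T0 \<theta> j)"
proof -
  define S where "S = (\<Sum>m<J. mixw \<theta> m * prD1 K T0 \<theta> m)"
  define E1 where "E1 j = (\<Sum>xs\<in>paths K T. if xs ! (t - 1) = c then pWj T0 T \<theta> j xs 1 else 0)" for j
  define E0 where "E0 j = (\<Sum>xs\<in>paths K T. if xs ! (t - 1) = c then pW0cf T0 T \<theta> j xs else 0)" for j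
  have trm: "postZ K J T0 \<theta> j * ltatt K T0 T \<theta> j t c = mixw \<theta> j * (E1 j - E0 j) / S" if j: "j < J" for j
  proof (cases "prD1 K T0 \<theta> j = 0")
    case True
    have nn: "\<forall>x\<in>{..<K}. init \<theta> j x 1 \<ge> 0" using v j unfolding valid_pmfs_def by auto
    have i0: "init \<theta> j x 1 = 0" if "x < K" for x
      using True sum_nonneg_eq_0_iff[of "{..<K}" "\<lambda>x. init \<theta> j x 1"] nn that unfolding prD1_def by auto
    have P0: "Ppre \<theta> j T0 xs 1 = 0" if "xs \<in> paths K T" for xs
    proof -
      have "xs ! 0 < K" using paths_nth[OF that] T0 by simp
      then show ?thesis using i0 by (simp add: Ppre_chain)
    qed
    have "E1 j = 0" unfolding E1_def using P0 by (intro sum.neutral) (simp add: pWj_def)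
    moreover have "E0 j = 0" unfolding E0_def using P0 by (intro sum.neutral) (simp add: pW0cf_def)
    ultimately show ?thesis unfolding ltatt_def E1_def[symmetric] E0_def[symmetric] using True by simp
  next
    case False
    show ?thesis unfolding postZ_def ltatt_def E1_def[symmetric] E0_def[symmetric] S_def[symmetric]
      using False by (cases "S = 0") (simp_all add: field_simps)
  qed
  have "att K J T0 T \<theta> t c = (\<Sum>j<J. mixw \<theta> j * (E1 j - E0 j) / S)"
    unfolding att_def using trm by simp
  also have "\<dots> = ((\<Sum>j<J. mixw \<theta> j * E1 j) - (\<Sum>j<J. mixw \<theta> j * E0 j)) / S"
    by (simp add: sum_divide_distrib[symmetric] right_diff_distrib sum_subtractf)
  also have "(\<Sum>j<J. mixw \<theta> j * E1 j) = (\<Sum>xs\<in>paths K T. if xs ! (t - 1) = c then pW J T0 T \<theta> xs 1 else 0)"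
  proof -
    have "(\<Sum>j<J. mixw \<theta> j * E1 j) = (\<Sum>j<J. \<Sum>xs\<in>paths K T. if xs ! (t - 1) = c then mixw \<theta> j * pWj T0 T \<theta> j xs 1 else 0)"
      unfolding E1_def sum_distrib_left by (intro sum.cong refl) simp
    also have "\<dots> = (\<Sum>xs\<in>paths K T. \<Sum>j<J. if xs ! (t - 1) = c then mixw \<theta> j * pWj T0 T \<theta> j xs 1 else 0)"
      by (rule sum.swap)
    also have "\<dots> = (\<Sum>xs\<in>paths K T. if xs ! (t - 1) = c then pW J T0 T \<theta> xs 1 else 0)"
      unfolding pW_def by (intro sum.cong refl) simp
    finally show ?thesis .
  qed
  also have "(\<Sum>j<J. mixw \<theta> j * E0 j) = (\<Sum>xs\<in>paths K T. if xs ! (t - 1) = c then (\<Sum>j<J. mixw \<theta> j * pW0cf T0 T \<theta> j xs) else 0)"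
  proof -
    have "(\<Sum>j<J. mixw \<theta> j * E0 j) = (\<Sum>j<J. \<Sum>xs\<in>paths K T. if xs ! (t - 1) = c then mixw \<theta> j * pW0cf T0 T \<theta> j xs else 0)"
      unfolding E0_def sum_distrib_left by (intro sum.cong refl) simp
    also have "\<dots> = (\<Sum>xs\<in>paths K T. \<Sum>j<J. if xs ! (t - 1) = c then mixw \<theta> j * pW0cf T0 T \<theta> j xs else 0)"
      by (rule sum.swap)
    also have "\<dots> = (\<Sum>xs\<in>paths K T. if xs ! (t - 1) = c then (\<Sum>j<J. mixw \<theta> j * pW0cf T0 T \<theta> j xs) else 0)"
      by (intro sum.cong refl) simp
    finally show ?thesis .
  qed
  finally show ?thesis unfolding S_def .
qed

lemma prD1_paths:
  assumes v: "valid_pmfs K J T0 T \<theta>" and j: "j < J" and k: "1 \<le> k" "k \<le> T"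
  shows "prD1 K T0 \<theta> j = (\<Sum>xi1\<in>paths K k. Ppre \<theta> j k xi1 1)"
proof -
  have "(\<Sum>xi1\<in>paths K k. Ppre \<theta> j k xi1 1) = (\<Sum>xi1\<in>paths K (1 + (k - 1)). Ppre \<theta> j k xi1 1)"
    using k by simp
  also have "\<dots> = (\<Sum>u\<in>paths K 1. \<Sum>w\<in>paths K (k - 1). Ppre \<theta> j k (u @ w) 1)"
    by (rule sum_paths_add)
  also have "\<dots> = (\<Sum>u\<in>paths K 1. Ppre \<theta> j 1 u 1)"
  proof (intro sum.cong refl)
    fix u assume u: "u \<in> paths K 1"
    show "(\<Sum>w\<in>paths K (k - 1). Ppre \<theta> j k (u @ w) 1) = Ppre \<theta> j 1 u 1"
      using Ppre_marg[where n=1 and N=k and d=1, OF v j u _ k(1) k(2)] by simp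
  qed
  also have "\<dots> = (\<Sum>x<K. init \<theta> j x 1)"
    by (simp only: sum_paths_1) (simp add: Ppre_chain)
  finally show ?thesis unfolding prD1_def by simp
qed

lemma Ppre_take:
  assumes xs: "xs \<in> paths K N" and n: "1 \<le> n" "n \<le> N"
  shows "Ppre \<theta> j N xs d = Ppre \<theta> j n (take n xs) d * chain (trans0 \<theta> j) n N xs"
proof -
  have len: "length xs = N" using xs by (simp add: paths_def)
  have "chain (trans0 \<theta> j) 1 N xs = chain (trans0 \<theta> j) 1 n xs * chain (trans0 \<theta> j) n N xs"
    using chain_split n by blast
  moreover have "chain (trans0 \<theta> j) 1 n xs = chain (trans0 \<theta> j) 1 n (take n xs)"
    by (rule chain_cong) simp
  moreover have "take n xs ! 0 = xs ! 0" using n by simp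
  ultimately show ?thesis by (simp add: Ppre_chain)
qed

context three begin

lemma CF_term:
  assumes m: "model K J T0 T \<epsilon> \<theta>" and j: "j < J" and xs: "xs \<in> paths K T"
  shows "mixw \<theta> j * pW0cf T0 T \<theta> j xs =
    (mixw \<theta> j * Ppre \<theta> j k (take k xs) 1) * wt T \<theta> j xs / (mixw \<theta> j * Ppre \<theta> j k (take k xs) 0)"
proof -
  have T01: "1 \<le> T0" using T0k by simp
  have kT: "k \<le> T" using Tk by simp
  have tk: "take k xs \<in> paths K k" using xs kT by (auto simp: paths_def dest: in_set_takeD)
  let ?C = "chain (trans0 \<theta> j) k T xs"
  have a: "mixw \<theta> j * pW0cf T0 T \<theta> j xs = mixw \<theta> j * Ppre \<theta> j k (take k xs) 1 * ?C"
    using pW0cf_chain[OF T01 T0T] Ppre_take[OF xs k1 kT] by simp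
  have b: "wt T \<theta> j xs = mixw \<theta> j * Ppre \<theta> j k (take k xs) 0 * ?C"
    unfolding wt_def using Ppre_take[OF xs k1 kT] by simp
  show ?thesis
  proof (cases "mixw \<theta> j * Ppre \<theta> j k (take k xs) 0 = 0")
    case True
    have "mixw \<theta> j > 0" using model_facts(4)[OF m J1 eps] j by blast
    then have "Ppre \<theta> j k (take k xs) 0 = 0" using True by simp
    then have "Ppre \<theta> j k (take k xs) 1 = 0" using overlap0[OF m J1 eps j tk k1] T0k T0T by simp
    then show ?thesis using a True by simp
  next
    case False
    then show ?thesis using a b by simp
  qed
qed

lemma att_eq: "att K J T0 T p t c = att K J T0 T s t c"
proof -
  have T01: "1 \<le> T0" using T0k by simp
  have kT: "k \<le> T" using Tk by simp
  have E1: "(\<Sum>xs\<in>paths K T. if xs ! (t - 1) = c then pW J T0 T p xs 1 else 0) = (\<Sum>xs\<in>paths K T. if xs ! (t - 1) = c then pW J T0 T s xs 1 else 0)"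
    using eqW by (intro sum.cong refl) simp
  have E0: "(\<Sum>j<J. mixw p j * pW0cf T0 T p j xs) = (\<Sum>j<J. mixw s j * pW0cf T0 T s j xs)" if xs: "xs \<in> paths K T" for xs
  proof -
    have tk: "take k xs \<in> paths K k" using xs kT by (auto simp: paths_def dest: in_set_takeD)
    have "(\<Sum>j<J. mixw p j * pW0cf T0 T p j xs) = (\<Sum>m<J. mixw p (\<rho> m) * pW0cf T0 T p (\<rho> m) xs)"
      by (rule reidx)
    also have "\<dots> = (\<Sum>m<J. (mixw s m * Ppre s m k (take k xs) 1) * wt T s m xs / (mixw s m * Ppre s m k (take k xs) 0))"
    proof (intro sum.cong refl)
      fix m assume "m \<in> {..<J}"
      then have m: "m < J" by simp
      show "mixw p (\<rho> m) * pW0cf T0 T p (\<rho> m) xs = (mixw s m * Ppre s m k (take k xs) 1) * wt T s m xs / (mixw s m * Ppre s m k (take k xs) 0)"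
        using CF_term[OF mp rhoJ[OF m] xs] UA[OF tk m] WA[OF tk m] rho(2) xs m by simp
    qed
    also have "\<dots> = (\<Sum>m<J. mixw s m * pW0cf T0 T s m xs)"
      using CF_term[OF ms _ xs] by simp
    finally show ?thesis .
  qed
  have S: "(\<Sum>j<J. mixw \<theta> j * prD1 K T0 \<theta> j) = (\<Sum>xi1\<in>paths K k. \<Sum>j<J. mixw \<theta> j * Ppre \<theta> j k xi1 1)"
    if v: "valid_pmfs K J T0 T \<theta>" for \<theta>
  proof -
    have "(\<Sum>j<J. mixw \<theta> j * prD1 K T0 \<theta> j) = (\<Sum>j<J. \<Sum>xi1\<in>paths K k. mixw \<theta> j * Ppre \<theta> j k xi1 1)"
      using prD1_paths[OF v _ k1 kT] by (simp add: sum_distrib_left)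
    also have "\<dots> = (\<Sum>xi1\<in>paths K k. \<Sum>j<J. mixw \<theta> j * Ppre \<theta> j k xi1 1)" by (rule sum.swap)
    finally show ?thesis .
  qed
  have SS: "(\<Sum>j<J. mixw p j * prD1 K T0 p j) = (\<Sum>j<J. mixw s j * prD1 K T0 s j)"
  proof -
    have "(\<Sum>xi1\<in>paths K k. \<Sum>j<J. mixw p j * Ppre p j k xi1 1) = (\<Sum>xi1\<in>paths K k. \<Sum>j<J. mixw s j * Ppre s j k xi1 1)"
    proof (rule sum.cong[OF refl])
      fix xi1 assume xi1: "xi1 \<in> paths K k"
      have "(\<Sum>j<J. mixw p j * Ppre p j k xi1 1) = (\<Sum>m<J. mixw p (\<rho> m) * Ppre p (\<rho> m) k xi1 1)" by (rule reidx)
      also have "\<dots> = (\<Sum>m<J. mixw s m * Ppre s m k xi1 1)" using UA[OF xi1] by simp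
      finally show "(\<Sum>j<J. mixw p j * Ppre p j k xi1 1) = (\<Sum>j<J. mixw s j * Ppre s j k xi1 1)" .
    qed
    then show ?thesis using S[OF vp] S[OF vs] by simp
  qed
  have E0': "(\<Sum>xs\<in>paths K T. if xs ! (t - 1) = c then (\<Sum>j<J. mixw p j * pW0cf T0 T p j xs) else 0)
      = (\<Sum>xs\<in>paths K T. if xs ! (t - 1) = c then (\<Sum>j<J. mixw s j * pW0cf T0 T s j xs) else 0)"
    using E0 by (intro sum.cong refl) simp
  show ?thesis
    by (simp only: att_form[OF vp T01 T0T] att_form[OF vs T01 T0T] E1 E0' SS)
qed

end

theorem corollary2:
  fixes K J T0 T k :: nat and \<epsilon> :: real and \<psi>s \<psi> :: param
  assumes "K \<ge> 2" and "J \<ge> 1" and "T0 \<ge> 1" and "T > T0" and "\<epsilon> > 0"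
    and "k \<ge> 1" and "T0 \<ge> k + 1" and "T \<ge> 2 * (k + 1)"
    and "model K J T0 T \<epsilon> \<psi>s"
    and "\<forall>i j. i < j \<and> j < J \<longrightarrow> mixw \<psi>s i < mixw \<psi>s j"
    and "ID K J T k \<psi>s"
    and "model K J T0 T \<epsilon> \<psi>"
    and "\<forall>xs\<in>paths K T. \<forall>d\<in>{0,1}. pW J T0 T \<psi> xs d = pW J T0 T \<psi>s xs d"
    and "T0 + 1 \<le> t" and "t \<le> T"
  shows "\<forall>c<K. att K J T0 T \<psi> t c = att K J T0 T \<psi>s t c"
proof -
  have T3: "k + 3 \<le> T" using assms(6,8) by simp
  interpret three K J T0 T k \<psi>s \<psi> \<epsilon>
  proof (unfold_locales)
    show "\<forall>j<J. \<forall>x<K. \<forall>y<K. 0 < q32 k \<psi>s j x y"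
      using assms(11) unfolding ID_def ID_b_def by blast
  qed (use assms T3 in \<open>auto simp: ID_def model_def\<close>)
  show ?thesis using att_eq by blast
qed

end
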